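(* Let $(L,H)$ be a correspondence-cover of a cycle $C$ such that $|L(v)|\geq 2$ for all $v\in V(C)$ and $|L(v)|\geq 3$ for at least three vertices $v$ of $C$. Then $(L,H)$ has a fractional packing.
   Context: A correspondence-cover of a graph $G$ is a pair $(L,H)$ where $H$ is a graph and $L$ maps each $v\in V(G)$ to a subset $L(v)\subseteq V(H)$ such that: the sets $L(v)$ partition $V(H)$; each $L(v)$ induces a clique in $H$; if $uv\notin E(G)$ there are no edges of $H$ between $L(u)$ and $L(v)$; if $uv\in E(G)$ the edges of $H$ between $L(u)$ and $L(v)$ form a matching. An independent transversal is an independent set of $H$ containing exactly one vertex of each $L(v)$. A cover has a fractional packing if there is a probability distribution on independent transversals $I$ such that $\Pr(x\in I)=1/|L(v)|$ for every vertex $v$ and every $x\in L(v)$ (lists need not have equal sizes). *)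

theory Defs
  imports "HOL-Probability.Probability_Mass_Function"
begin

definition simple_graph :: "'a set \<Rightarrow> ('a \<Rightarrow> 'a \<Rightarrow> bool) \<Rightarrow> bool" where
  "simple_graph V E \<longleftrightarrow>
     (\<forall>x y. E x y \<longrightarrow> x \<in> V \<and> y \<in> V) \<and>
     (\<forall>x y. E x y \<longrightarrow> E y x) \<and>
     (\<forall>x. \<not> E x x)"

definition cycle_edge :: "nat \<Rightarrow> nat \<Rightarrow> nat \<Rightarrow> bool" where
  "cycle_edge n u v \<longleftrightarrow> u < n \<and> v < n \<and> (v = (u + 1) mod n \<or> u = (v + 1) mod n)"

definition corr_cover ::
  "'a set \<Rightarrow> ('a \<Rightarrow> 'a \<Rightarrow> bool) \<Rightarrow> ('a \<Rightarrow> 'b set) \<Rightarrow> 'b set \<Rightarrow> ('b \<Rightarrow> 'b \<Rightarrow> bool) \<Rightarrow> bool" where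
  "corr_cover VG EG L VH EH \<longleftrightarrow>
     simple_graph VH EH \<and>
     (\<Union>v\<in>VG. L v) = VH \<and>
     (\<forall>u\<in>VG. \<forall>v\<in>VG. u \<noteq> v \<longrightarrow> L u \<inter> L v = {}) \<and>
     (\<forall>v\<in>VG. \<forall>x\<in>L v. \<forall>y\<in>L v. x \<noteq> y \<longrightarrow> EH x y) \<and>
     (\<forall>u\<in>VG. \<forall>v\<in>VG. u \<noteq> v \<longrightarrow> \<not> EG u v \<longrightarrow> (\<forall>x\<in>L u. \<forall>y\<in>L v. \<not> EH x y)) \<and>
     (\<forall>u\<in>VG. \<forall>v\<in>VG. EG u v \<longrightarrow>
        (\<forall>x\<in>L u. \<forall>y\<in>L v. \<forall>y'\<in>L v. EH x y \<and> EH x y' \<longrightarrow> y = y'))"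

definition indep_transversal ::
  "'a set \<Rightarrow> ('a \<Rightarrow> 'b set) \<Rightarrow> 'b set \<Rightarrow> ('b \<Rightarrow> 'b \<Rightarrow> bool) \<Rightarrow> 'b set \<Rightarrow> bool" where
  "indep_transversal VG L VH EH I \<longleftrightarrow>
     I \<subseteq> VH \<and> (\<forall>x\<in>I. \<forall>y\<in>I. \<not> EH x y) \<and> (\<forall>v\<in>VG. card (I \<inter> L v) = 1)"

definition has_fractional_packing ::
  "'a set \<Rightarrow> ('a \<Rightarrow> 'b set) \<Rightarrow> 'b set \<Rightarrow> ('b \<Rightarrow> 'b \<Rightarrow> bool) \<Rightarrow> bool" where
  "has_fractional_packing VG L VH EH \<longleftrightarrow>
     (\<exists>p :: 'b set pmf.
        (\<forall>I\<in>set_pmf p. indep_transversal VG L VH EH I) \<and>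
        (\<forall>v\<in>VG. \<forall>x\<in>L v. measure_pmf.prob p {I. x \<in> I} = 1 / real (card (L v))))"

end

theory Submission
  imports Defs
begin

lemma prob_bind_pmf_of_set:
  assumes "finite A" "A \<noteq> {}"
  shows "measure_pmf.prob (pmf_of_set A \<bind> f) X = (\<Sum>a\<in>A. measure_pmf.prob (f a) X) / card A"
proof -
  have "emeasure (measure_pmf (pmf_of_set A \<bind> f)) X = (\<integral>\<^sup>+a. emeasure (measure_pmf (f a)) X \<partial>(pmf_of_set A))"
    by (rule emeasure_bind_pmf)
  also have "\<dots> = (\<Sum>a\<in>A. emeasure (measure_pmf (f a)) X) / card A"
    by (rule nn_integral_pmf_of_set[OF assms(2) assms(1)])
  also have "\<dots> = ennreal ((\<Sum>a\<in>A. measure_pmf.prob (f a) X) / card A)"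
  proof -
    have "(\<Sum>a\<in>A. emeasure (measure_pmf (f a)) X) = ennreal (\<Sum>a\<in>A. measure_pmf.prob (f a) X)"
      by (simp add: measure_pmf.emeasure_eq_measure sum_ennreal)
    moreover have "(of_nat (card A) :: ennreal) = ennreal (real (card A))"
      by (rule ennreal_of_nat_eq_real_of_nat)
    moreover have "ennreal (\<Sum>a\<in>A. measure_pmf.prob (f a) X) / ennreal (real (card A))
       = ennreal ((\<Sum>a\<in>A. measure_pmf.prob (f a) X) / real (card A))"
      by (rule divide_ennreal) (use assms in \<open>auto intro: sum_nonneg simp: card_gt_0_iff\<close>)
    ultimately show ?thesis
      by simp
  qed
  finally have "ennreal (measure_pmf.prob (pmf_of_set A \<bind> f) X) =
     ennreal ((\<Sum>a\<in>A. measure_pmf.prob (f a) X) / real (card A))"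
    by (simp add: measure_pmf.emeasure_eq_measure)
  then show ?thesis
    by (subst (asm) ennreal_inj) (auto intro!: divide_nonneg_nonneg sum_nonneg)
qed

lemma cc_simple: "corr_cover VG EG L VH EH \<Longrightarrow> simple_graph VH EH"
  unfolding corr_cover_def by simp
lemma cc_union: "corr_cover VG EG L VH EH \<Longrightarrow> (\<Union>v\<in>VG. L v) = VH"
  unfolding corr_cover_def by simp
lemma cc_disj: "corr_cover VG EG L VH EH \<Longrightarrow> u \<in> VG \<Longrightarrow> v \<in> VG \<Longrightarrow> u \<noteq> v \<Longrightarrow> L u \<inter> L v = {}"
  unfolding corr_cover_def by simp
lemma cc_clique: "corr_cover VG EG L VH EH \<Longrightarrow> v \<in> VG \<Longrightarrow> x \<in> L v \<Longrightarrow> y \<in> L v \<Longrightarrow> x \<noteq> y \<Longrightarrow> EH x y"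
  unfolding corr_cover_def by simp
lemma cc_nonedge: "corr_cover VG EG L VH EH \<Longrightarrow> u \<in> VG \<Longrightarrow> v \<in> VG \<Longrightarrow> u \<noteq> v \<Longrightarrow> \<not> EG u v
   \<Longrightarrow> x \<in> L u \<Longrightarrow> y \<in> L v \<Longrightarrow> \<not> EH x y"
  unfolding corr_cover_def by blast
lemma cc_match: "corr_cover VG EG L VH EH \<Longrightarrow> u \<in> VG \<Longrightarrow> v \<in> VG \<Longrightarrow> EG u v
   \<Longrightarrow> x \<in> L u \<Longrightarrow> y \<in> L v \<Longrightarrow> y' \<in> L v \<Longrightarrow> EH x y \<Longrightarrow> EH x y' \<Longrightarrow> y = y'"
  unfolding corr_cover_def by blast
lemma sg_sym: "simple_graph V E \<Longrightarrow> E x y \<Longrightarrow> E y x"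
  unfolding simple_graph_def by blast
lemma sg_irrefl: "simple_graph V E \<Longrightarrow> \<not> E x x"
  unfolding simple_graph_def by blast
lemma sg_in: "simple_graph V E \<Longrightarrow> E x y \<Longrightarrow> x \<in> V \<and> y \<in> V"
  unfolding simple_graph_def by blast

definition restrictE :: "('b \<Rightarrow> 'b \<Rightarrow> bool) \<Rightarrow> 'b \<Rightarrow> 'b \<Rightarrow> 'b \<Rightarrow> bool" where
  "restrictE EH x = (\<lambda>a b. EH a b \<and> a \<noteq> x \<and> b \<noteq> x)"

lemma sub_cover:
  assumes cov: "corr_cover VG EG L VH EH" and v: "v \<in> VG" and x: "x \<in> L v"
  shows "corr_cover VG EG (L(v := L v - {x})) (VH - {x}) (restrictE EH x)"
proof -
  have disj: "x \<notin> L u" if u: "u \<in> VG" "u \<noteq> v" for u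
  proof -
    have "L u \<inter> L v = {}" using cc_disj[OF cov u(1) v u(2)] .
    then show "x \<notin> L u" using x by blast
  qed
  have LV: "L u \<subseteq> VH" if "u \<in> VG" for u using cc_union[OF cov] that by blast
  have un: "(\<Union>u\<in>VG. (L(v := L v - {x})) u) = VH - {x}"
  proof
    show "(\<Union>u\<in>VG. (L(v := L v - {x})) u) \<subseteq> VH - {x}"
    proof
      fix y assume "y \<in> (\<Union>u\<in>VG. (L(v := L v - {x})) u)"
      then obtain u where u: "u \<in> VG" "y \<in> (L(v := L v - {x})) u" by blast
      show "y \<in> VH - {x}"
      proof (cases "u = v")
        case True then show ?thesis using u LV by auto
      next
        case False then show ?thesis using u LV disj[of u] by auto
      qed
    qed
    show "VH - {x} \<subseteq> (\<Union>u\<in>VG. (L(v := L v - {x})) u)"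
    proof
      fix y assume y: "y \<in> VH - {x}"
      then obtain u where "u \<in> VG" "y \<in> L u" using cc_union[OF cov] by blast
      then show "y \<in> (\<Union>u\<in>VG. (L(v := L v - {x})) u)" using y by (cases "u = v") auto
    qed
  qed
  have sg: "simple_graph VH EH" using cc_simple[OF cov] .
  have L'sub: "(L(v := L v - {x})) u \<subseteq> L u" for u by auto
  show ?thesis
    unfolding corr_cover_def
  proof (intro conjI)
    show "simple_graph (VH - {x}) (restrictE EH x)"
      unfolding simple_graph_def restrictE_def using sg_in[OF sg] sg_sym[OF sg] sg_irrefl[OF sg] by blast
    show "(\<Union>u\<in>VG. (L(v := L v - {x})) u) = VH - {x}" by (rule un)
    show "\<forall>u\<in>VG. \<forall>w\<in>VG. u \<noteq> w \<longrightarrow> (L(v := L v - {x})) u \<inter> (L(v := L v - {x})) w = {}"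
      using cc_disj[OF cov] L'sub by blast
    show "\<forall>w\<in>VG. \<forall>a\<in>(L(v := L v - {x})) w. \<forall>b\<in>(L(v := L v - {x})) w. a \<noteq> b \<longrightarrow> restrictE EH x a b"
      unfolding restrictE_def using cc_clique[OF cov] L'sub disj by (auto split: if_splits)
    show "\<forall>u\<in>VG. \<forall>w\<in>VG. u \<noteq> w \<longrightarrow> \<not> EG u w \<longrightarrow> (\<forall>a\<in>(L(v := L v - {x})) u. \<forall>b\<in>(L(v := L v - {x})) w. \<not> restrictE EH x a b)"
      unfolding restrictE_def using cc_nonedge[OF cov] L'sub by blast
    show "\<forall>u\<in>VG. \<forall>w\<in>VG. EG u w \<longrightarrow> (\<forall>a\<in>(L(v := L v - {x})) u. \<forall>b\<in>(L(v := L v - {x})) w. \<forall>b'\<in>(L(v := L v - {x})) w. restrictE EH x a b \<and> restrictE EH x a b' \<longrightarrow> b = b')"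
      unfolding restrictE_def using cc_match[OF cov] L'sub by blast
  qed
qed

lemma sub_transversal:
  assumes "indep_transversal VG (L(v := L v - {x})) (VH - {x}) (restrictE EH x) I" "v \<in> VG"
  shows "indep_transversal VG L VH EH I"
proof -
  have I: "I \<subseteq> VH - {x}" using assms unfolding indep_transversal_def by auto
  have "\<forall>a\<in>I. \<forall>b\<in>I. \<not> EH a b"
    using assms I unfolding indep_transversal_def restrictE_def by blast
  moreover have "\<forall>u\<in>VG. card (I \<inter> L u) = 1"
  proof
    fix u assume u: "u \<in> VG"
    have "card (I \<inter> (L(v := L v - {x})) u) = 1" using assms u unfolding indep_transversal_def by auto
    moreover have "I \<inter> (L(v := L v - {x})) u = I \<inter> L u" using I by auto
    ultimately show "card (I \<inter> L u) = 1" by simp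
  qed
  ultimately show ?thesis using I unfolding indep_transversal_def by auto
qed

lemma mixture:
  assumes cov: "corr_cover VG EG L VH EH" and v: "v \<in> VG" and fin: "finite (L v)"
    and two: "card (L v) \<ge> 2"
    and IH: "\<forall>x\<in>L v. has_fractional_packing VG (L(v := L v - {x})) (VH - {x}) (restrictE EH x)"
  shows "has_fractional_packing VG L VH EH"
proof -
  from IH obtain p where p: "\<And>x. x \<in> L v \<Longrightarrow>
      (\<forall>I\<in>set_pmf (p x). indep_transversal VG (L(v := L v - {x})) (VH - {x}) (restrictE EH x) I) \<and>
      (\<forall>u\<in>VG. \<forall>y\<in>(L(v := L v - {x})) u. measure_pmf.prob (p x) {I. y \<in> I} = 1 / real (card ((L(v := L v - {x})) u)))"
    unfolding has_fractional_packing_def by metis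
  have ne: "L v \<noteq> {}" using two by auto
  define q where "q = pmf_of_set (L v) \<bind> p"
  have supp: "\<forall>I\<in>set_pmf q. indep_transversal VG L VH EH I"
  proof
    fix I assume "I \<in> set_pmf q"
    then obtain x where x: "x \<in> L v" "I \<in> set_pmf (p x)" unfolding q_def using fin ne by auto
    then show "indep_transversal VG L VH EH I" using p[OF x(1)] v by (auto intro: sub_transversal)
  qed
  have prob: "measure_pmf.prob q {I. y \<in> I} = 1 / real (card (L u))" if u: "u \<in> VG" and y: "y \<in> L u" for u y
  proof -
    have eq: "measure_pmf.prob q {I. y \<in> I} = (\<Sum>x\<in>L v. measure_pmf.prob (p x) {I. y \<in> I}) / card (L v)"
      unfolding q_def using fin ne by (rule prob_bind_pmf_of_set)
    show ?thesis
    proof (cases "u = v")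
      case False
      have "\<forall>x\<in>L v. measure_pmf.prob (p x) {I. y \<in> I} = 1 / real (card (L u))"
        using p u y False by auto
      then have "(\<Sum>x\<in>L v. measure_pmf.prob (p x) {I. y \<in> I}) = card (L v) * (1 / real (card (L u)))"
        by simp
      then show ?thesis using eq fin ne by simp
    next
      case True
      have s1: "measure_pmf.prob (p x) {I. y \<in> I} = 1 / real (card (L v) - 1)" if "x \<in> L v" "x \<noteq> y" for x
        using p[OF that(1)] True y that fin v by (auto simp: card_Diff_singleton)
      have s0: "measure_pmf.prob (p y) {I. y \<in> I} = 0"
      proof -
        have "\<forall>I\<in>set_pmf (p y). y \<notin> I"
          using p[of y] True y unfolding indep_transversal_def by auto
        then show ?thesis by (auto simp: measure_pmf_zero_iff)
      qed
      have yv: "y \<in> L v" using True y by simp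
      have "(\<Sum>x\<in>L v. measure_pmf.prob (p x) {I. y \<in> I}) =
          (\<Sum>x\<in>L v - {y}. measure_pmf.prob (p x) {I. y \<in> I}) + measure_pmf.prob (p y) {I. y \<in> I}"
        using fin yv by (simp add: sum.remove add.commute)
      also have "\<dots> = (\<Sum>x\<in>L v - {y}. 1 / real (card (L v) - 1))"
        using s0 s1 by simp
      also have "\<dots> = 1"
        using fin yv two by (simp add: card_Diff_singleton of_nat_diff)
      finally show ?thesis using eq True by simp
    qed
  qed
  show ?thesis unfolding has_fractional_packing_def
    by (rule exI[of _ q]) (use supp prob in auto)
qed

lemma extend_inj:
  assumes finA: "finite A" and finB: "finite B" and le: "card A \<le> card B"
    and func: "\<And>a b b'. a \<in> A \<Longrightarrow> b \<in> B \<Longrightarrow> b' \<in> B \<Longrightarrow> R a b \<Longrightarrow> R a b' \<Longrightarrow> b = b'"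
    and injR: "\<And>a a' b. a \<in> A \<Longrightarrow> a' \<in> A \<Longrightarrow> b \<in> B \<Longrightarrow> R a b \<Longrightarrow> R a' b \<Longrightarrow> a = a'"
  shows "\<exists>h. inj_on h A \<and> h ` A \<subseteq> B \<and> (\<forall>a\<in>A. \<forall>b\<in>B. R a b \<longrightarrow> h a = b)"
proof -
  define D where "D = {a\<in>A. \<exists>b\<in>B. R a b}"
  define \<phi> where "\<phi> a = (THE b. b \<in> B \<and> R a b)" for a
  have phi: "\<phi> a \<in> B \<and> R a (\<phi> a)" if aD: "a \<in> D" for a
  proof -
    obtain b where b: "b \<in> B" "R a b" using aD unfolding D_def by auto
    have "\<exists>!b. b \<in> B \<and> R a b" using b func aD unfolding D_def by blast
    then show ?thesis unfolding \<phi>_def by (rule theI')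
  qed
  have phi_inj: "inj_on \<phi> D"
  proof (rule inj_onI)
    fix a a' assume a: "a \<in> D" "a' \<in> D" "\<phi> a = \<phi> a'"
    have "R a (\<phi> a)" "R a' (\<phi> a)" "\<phi> a \<in> B" using phi[OF a(1)] phi[OF a(2)] a(3) by auto
    then show "a = a'" using injR a(1,2) unfolding D_def by blast
  qed
  have DA: "D \<subseteq> A" unfolding D_def by auto
  have finD: "finite D" using finA DA finite_subset by blast
  have phiB: "\<phi> ` D \<subseteq> B" using phi by auto
  have cD: "card (\<phi> ` D) = card D" using phi_inj by (simp add: card_image)
  have "card (A - D) \<le> card (B - \<phi> ` D)"
    using le DA phiB finD finA finB cD by (simp add: card_Diff_subset finite_subset)
  then obtain \<psi> where psi: "inj_on \<psi> (A - D)" "\<psi> ` (A - D) \<subseteq> B - \<phi> ` D"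
    using card_le_inj[of "A - D" "B - \<phi> ` D"] finA finB by auto
  define h where "h a = (if a \<in> D then \<phi> a else \<psi> a)" for a
  have "inj_on h A"
  proof (rule inj_onI)
    fix a a' assume a: "a \<in> A" "a' \<in> A" "h a = h a'"
    show "a = a'"
    proof (cases "a \<in> D"; cases "a' \<in> D")
      assume "a \<in> D" "a' \<in> D" then show ?thesis using a phi_inj unfolding h_def by (auto dest: inj_onD)
    next
      assume "a \<in> D" "a' \<notin> D" then show ?thesis using a psi unfolding h_def by auto
    next
      assume "a \<notin> D" "a' \<in> D" then show ?thesis using a psi unfolding h_def by force
    next
      assume "a \<notin> D" "a' \<notin> D" then show ?thesis using a psi unfolding h_def by (auto dest: inj_onD)
    qed
  qed
  moreover have "h ` A \<subseteq> B" using phi psi unfolding h_def by auto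
  moreover have "\<forall>a\<in>A. \<forall>b\<in>B. R a b \<longrightarrow> h a = b"
  proof (intro ballI impI)
    fix a b assume ab: "a \<in> A" "b \<in> B" "R a b"
    then have "a \<in> D" unfolding D_def by auto
    then show "h a = b" using phi func ab unfolding h_def by auto
  qed
  ultimately show ?thesis by blast
qed

lemma inj_card_bij:
  assumes "inj_on h A" "h ` A \<subseteq> B" "finite B" "card A = card B"
  shows "bij_betw h A B"
proof -
  have "card (h ` A) = card B" using assms by (simp add: card_image)
  then have "h ` A = B" using assms card_subset_eq by blast
  then show ?thesis using assms unfolding bij_betw_def by auto
qed

definition perms :: "nat list list" where
  "perms = [[0,1,2],[0,2,1],[1,0,2],[1,2,0],[2,0,1],[2,1,0]]"

definition lam :: "nat \<Rightarrow> nat \<Rightarrow> nat" where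
  "lam s b = (if b < s then b else Suc b)"

type_synonym layer = "nat \<times> nat \<times> nat \<times> nat \<times> nat \<times> nat"

definition segok :: "nat \<Rightarrow> (nat \<Rightarrow> nat) \<Rightarrow> nat \<Rightarrow> nat \<Rightarrow> nat \<Rightarrow> bool" where
  "segok c P x y b = (if c = 0 then y \<noteq> P x else (b < 2 \<and> lam (c - 1) b \<noteq> x \<and> P (lam (c - 1) (1 - b)) \<noteq> y))"

definition layerok :: "nat \<Rightarrow> nat \<Rightarrow> nat \<Rightarrow> nat \<Rightarrow> layer \<Rightarrow> bool" where
  "layerok c0 c1 p c2 l = (case l of (x0,x1,x2,b0,b1,b2) \<Rightarrow>
     x0 < 3 \<and> x1 < 3 \<and> x2 < 3 \<and> b0 < 2 \<and> b1 < 2 \<and> b2 < 2 \<and>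
     segok c0 id x0 x1 b0 \<and> segok c1 id x1 x2 b1 \<and> segok c2 (\<lambda>z. perms ! p ! z) x2 x0 b2)"

definition countok :: "nat \<Rightarrow> nat \<Rightarrow> nat \<Rightarrow> layer list \<Rightarrow> bool" where
  "countok c0 c1 c2 W = (length W = 6 \<and>
     (\<forall>i\<in>{0,1,2}. length (filter (\<lambda>(x0,x1,x2,b0,b1,b2). x0 = i) W) = 2 \<and>
                 length (filter (\<lambda>(x0,x1,x2,b0,b1,b2). x1 = i) W) = 2 \<and>
                 length (filter (\<lambda>(x0,x1,x2,b0,b1,b2). x2 = i) W) = 2) \<and>
     (c0 \<noteq> 0 \<longrightarrow> length (filter (\<lambda>(x0,x1,x2,b0,b1,b2). b0 = 0) W) = 3) \<and>
     (c1 \<noteq> 0 \<longrightarrow> length (filter (\<lambda>(x0,x1,x2,b0,b1,b2). b1 = 0) W) = 3) \<and>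
     (c2 \<noteq> 0 \<longrightarrow> length (filter (\<lambda>(x0,x1,x2,b0,b1,b2). b2 = 0) W) = 3))"

definition witT :: "layer list list" where
  "witT = [
[(0,1,2,0,0,0),(0,1,2,0,0,0),(1,2,0,0,0,0),(1,2,0,0,0,0),(2,0,1,0,0,0),(2,0,1,0,0,0)],
[(0,1,2,0,0,0),(0,2,1,0,0,1),(1,0,2,0,0,0),(1,2,0,0,0,0),(2,0,1,0,0,1),(2,1,0,0,0,1)],
[(0,1,2,0,0,0),(0,2,1,0,0,0),(1,0,2,0,0,0),(1,2,0,0,0,1),(2,0,1,0,0,1),(2,1,0,0,0,1)],
[(0,1,2,0,0,0),(0,2,1,0,0,0),(1,0,2,0,0,1),(1,2,0,0,0,1),(2,0,1,0,0,0),(2,1,0,0,0,1)],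
[(0,1,2,0,0,0),(0,2,1,0,0,0),(1,0,1,0,0,0),(1,2,0,0,0,0),(2,0,2,0,0,0),(2,1,0,0,0,0)],
[(0,1,0,0,0,0),(0,1,0,0,0,1),(1,2,1,0,0,1),(1,2,1,0,0,1),(2,0,2,0,0,0),(2,0,2,0,0,0)],
[(0,1,2,0,0,0),(0,1,2,0,0,0),(1,2,0,0,0,1),(1,2,0,0,0,1),(2,0,1,0,0,0),(2,0,1,0,0,1)],
[(0,1,2,0,0,0),(0,2,1,0,0,0),(1,0,1,0,0,0),(1,2,0,0,0,1),(2,0,2,0,0,1),(2,1,0,0,0,1)],
[(0,1,2,0,0,0),(0,2,0,0,0,0),(1,0,2,0,0,0),(1,2,1,0,0,0),(2,0,1,0,0,0),(2,1,0,0,0,0)],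
[(0,1,2,0,0,0),(0,1,2,0,0,0),(1,2,0,0,0,0),(1,2,0,0,0,1),(2,0,1,0,0,1),(2,0,1,0,0,1)],
[(0,1,2,0,0,0),(0,2,0,0,0,1),(1,0,2,0,0,0),(1,2,1,0,0,0),(2,0,1,0,0,1),(2,1,0,0,0,1)],
[(0,1,0,0,0,1),(0,1,0,0,0,1),(1,2,1,0,0,0),(1,2,1,0,0,0),(2,0,2,0,0,0),(2,0,2,0,0,1)],
[(0,1,0,0,0,0),(0,1,0,0,0,0),(1,2,1,0,0,0),(1,2,1,0,0,0),(2,0,2,0,0,0),(2,0,2,0,0,0)],
[(0,1,0,0,0,1),(0,2,1,0,0,1),(1,0,1,0,0,1),(1,2,0,0,0,0),(2,0,2,0,0,0),(2,1,2,0,0,0)],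
[(0,1,0,0,0,1),(0,2,0,0,0,1),(1,0,2,0,0,0),(1,2,1,0,0,0),(2,0,1,0,0,1),(2,1,2,0,0,0)],
[(0,1,0,0,0,1),(0,2,1,0,0,0),(1,0,2,0,0,0),(1,2,1,0,0,0),(2,0,2,0,0,1),(2,1,0,0,0,1)],
[(0,1,0,0,0,0),(0,1,0,0,0,0),(1,2,1,0,0,0),(1,2,1,0,0,0),(2,0,2,0,0,0),(2,0,2,0,0,0)],
[(0,1,0,0,0,0),(0,1,2,0,0,0),(1,2,0,0,0,1),(1,2,1,0,0,1),(2,0,1,0,0,1),(2,0,2,0,0,0)],
[(0,1,0,0,0,1),(0,1,2,0,0,0),(1,2,0,0,0,1),(1,2,1,0,0,1),(2,0,1,0,0,0),(2,0,2,0,0,0)],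
[(0,1,0,0,0,1),(0,1,2,0,0,1),(1,2,0,0,0,1),(1,2,1,0,0,0),(2,0,1,0,0,0),(2,0,2,0,0,0)],
[(0,1,0,0,0,0),(0,2,1,0,0,0),(1,0,2,0,0,0),(1,2,0,0,0,0),(2,0,1,0,0,0),(2,1,2,0,0,0)],
[(0,1,0,0,0,1),(0,2,1,0,0,1),(1,0,2,0,0,0),(1,2,0,0,0,0),(2,0,1,0,0,1),(2,1,2,0,0,0)],
[(0,1,0,0,0,1),(0,1,0,0,0,1),(1,2,1,0,0,0),(1,2,1,0,0,1),(2,0,2,0,0,0),(2,0,2,0,0,0)],
[(0,1,0,0,0,1),(0,2,1,0,0,0),(1,0,2,0,0,1),(1,2,0,0,0,1),(2,0,1,0,0,0),(2,1,2,0,0,0)],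
[(0,1,2,0,1,0),(0,2,1,0,0,0),(1,0,2,0,1,0),(1,2,0,0,0,0),(2,0,1,0,0,0),(2,1,0,0,1,0)],
[(0,1,2,0,1,0),(0,2,1,0,0,1),(1,0,2,0,1,0),(1,2,0,0,0,0),(2,0,1,0,0,1),(2,1,0,0,1,1)],
[(0,1,2,0,1,0),(0,1,2,0,1,0),(1,2,0,0,0,1),(1,2,1,0,0,0),(2,0,0,0,1,1),(2,0,1,0,0,1)],
[(0,1,2,0,1,0),(0,2,1,0,0,0),(1,0,0,0,1,1),(1,2,0,0,0,1),(2,0,1,0,0,0),(2,1,2,0,1,1)],
[(0,1,2,0,1,0),(0,1,2,0,1,0),(1,2,1,0,0,0),(1,2,1,0,0,0),(2,0,0,0,0,0),(2,0,0,0,1,0)],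
[(0,1,0,0,1,0),(0,2,0,0,0,1),(1,0,1,0,0,1),(1,2,1,0,0,1),(2,0,2,0,1,0),(2,1,2,0,1,0)],
[(0,1,2,0,1,0),(0,1,2,0,1,0),(1,2,0,0,0,1),(1,2,1,0,0,1),(2,0,0,0,1,1),(2,0,1,0,0,0)],
[(0,1,2,0,1,0),(0,2,1,0,0,0),(1,0,0,0,0,1),(1,2,1,0,0,0),(2,0,0,0,1,1),(2,1,2,0,1,1)],
[(0,1,2,0,1,0),(0,1,2,0,1,0),(1,2,1,0,0,0),(1,2,1,0,0,0),(2,0,0,0,0,0),(2,0,0,0,1,0)],
[(0,1,2,0,1,0),(0,1,2,0,1,0),(1,2,0,0,0,0),(1,2,1,0,0,1),(2,0,0,0,1,1),(2,0,1,0,0,1)],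
[(0,1,2,0,1,0),(0,2,0,0,0,1),(1,0,2,0,1,0),(1,2,1,0,0,0),(2,0,1,0,0,1),(2,1,0,0,1,1)],
[(0,1,0,0,1,1),(0,1,2,0,1,1),(1,2,1,0,0,0),(1,2,1,0,0,0),(2,0,0,0,0,1),(2,0,2,0,1,0)],
[(0,1,0,0,1,0),(0,2,0,0,0,0),(1,0,1,0,0,0),(1,2,1,0,0,0),(2,0,2,0,1,0),(2,1,2,0,1,0)],
[(0,1,0,0,1,1),(0,2,1,0,0,1),(1,0,0,0,0,0),(1,2,1,0,0,1),(2,0,2,0,1,0),(2,1,2,0,1,0)],
[(0,1,0,0,1,1),(0,2,0,0,0,1),(1,0,2,0,1,0),(1,2,1,0,0,0),(2,0,1,0,0,1),(2,1,2,0,1,0)],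
[(0,1,0,0,1,1),(0,1,2,0,1,0),(1,2,1,0,0,0),(1,2,1,0,0,0),(2,0,0,0,0,1),(2,0,2,0,1,1)],
[(0,1,0,0,1,0),(0,1,2,0,1,0),(1,2,0,0,0,0),(1,2,1,0,0,0),(2,0,1,0,0,0),(2,0,2,0,1,0)],
[(0,1,0,0,1,0),(0,1,2,0,1,0),(1,2,0,0,0,1),(1,2,1,0,0,1),(2,0,1,0,0,1),(2,0,2,0,1,0)],
[(0,1,0,0,1,1),(0,1,2,0,1,0),(1,2,0,0,0,1),(1,2,1,0,0,1),(2,0,1,0,0,0),(2,0,2,0,1,0)],
[(0,1,0,0,1,1),(0,1,2,0,1,1),(1,2,0,0,0,1),(1,2,1,0,0,0),(2,0,1,0,0,0),(2,0,2,0,1,0)],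
[(0,1,0,0,1,0),(0,2,1,0,0,0),(1,0,2,0,1,0),(1,2,0,0,0,0),(2,0,1,0,0,0),(2,1,2,0,1,0)],
[(0,1,0,0,1,1),(0,2,1,0,0,1),(1,0,2,0,1,0),(1,2,0,0,0,0),(2,0,1,0,0,1),(2,1,2,0,1,0)],
[(0,1,0,0,1,1),(0,2,0,0,0,1),(1,0,1,0,0,0),(1,2,1,0,0,1),(2,0,2,0,1,0),(2,1,2,0,1,0)],
[(0,1,0,0,1,1),(0,2,1,0,0,0),(1,0,2,0,1,1),(1,2,0,0,0,1),(2,0,1,0,0,0),(2,1,2,0,1,0)],
[(0,1,2,0,1,0),(0,2,1,0,0,0),(1,0,2,0,1,0),(1,2,0,0,0,0),(2,0,1,0,1,0),(2,1,0,0,0,0)],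
[(0,1,2,0,1,0),(0,2,0,0,0,1),(1,0,2,0,1,0),(1,2,0,0,0,0),(2,0,1,0,1,1),(2,1,1,0,0,1)],
[(0,1,2,0,1,0),(0,2,1,0,0,0),(1,0,2,0,1,0),(1,2,0,0,0,1),(2,0,1,0,1,1),(2,1,0,0,0,1)],
[(0,1,1,0,0,0),(0,1,1,0,1,0),(1,2,0,0,0,1),(1,2,0,0,0,1),(2,0,2,0,1,0),(2,0,2,0,1,1)],
[(0,1,1,0,0,0),(0,1,1,0,1,0),(1,2,0,0,0,0),(1,2,0,0,0,0),(2,0,2,0,1,0),(2,0,2,0,1,0)],
[(0,1,0,0,0,0),(0,1,1,0,1,1),(1,2,0,0,0,1),(1,2,1,0,0,1),(2,0,2,0,1,0),(2,0,2,0,1,0)],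
[(0,1,1,0,0,0),(0,1,2,0,1,0),(1,2,0,0,0,1),(1,2,0,0,0,1),(2,0,1,0,1,1),(2,0,2,0,1,0)],
[(0,1,1,0,1,0),(0,2,1,0,0,0),(1,0,2,0,1,0),(1,2,0,0,0,1),(2,0,2,0,1,1),(2,1,0,0,0,1)],
[(0,1,2,0,1,0),(0,2,0,0,0,0),(1,0,2,0,1,0),(1,2,1,0,0,0),(2,0,1,0,1,0),(2,1,0,0,0,0)],
[(0,1,2,0,1,0),(0,2,0,0,0,0),(1,0,2,0,1,0),(1,2,0,0,0,1),(2,0,1,0,1,1),(2,1,1,0,0,1)],
[(0,1,2,0,1,0),(0,2,0,0,0,1),(1,0,2,0,1,0),(1,2,1,0,0,0),(2,0,1,0,1,1),(2,1,0,0,0,1)],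
[(0,1,0,0,0,1),(0,2,0,0,0,1),(1,0,1,0,1,0),(1,2,1,0,0,0),(2,0,2,0,1,0),(2,1,2,0,1,1)],
[(0,1,0,0,0,0),(0,2,0,0,0,0),(1,0,1,0,1,0),(1,2,1,0,0,0),(2,0,2,0,1,0),(2,1,2,0,1,0)],
[(0,1,0,0,0,1),(0,1,1,0,1,1),(1,2,0,0,0,0),(1,2,1,0,0,1),(2,0,2,0,1,0),(2,0,2,0,1,0)],
[(0,1,0,0,0,1),(0,2,0,0,0,1),(1,0,2,0,1,0),(1,2,1,0,0,0),(2,0,1,0,1,1),(2,1,2,0,1,0)],
[(0,1,1,0,1,0),(0,2,0,0,0,1),(1,0,2,0,1,0),(1,2,1,0,0,0),(2,0,2,0,1,1),(2,1,0,0,0,1)],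
[(0,1,0,0,0,0),(0,1,2,0,1,0),(1,2,0,0,0,0),(1,2,1,0,0,0),(2,0,1,0,1,0),(2,0,2,0,1,0)],
[(0,1,0,0,0,0),(0,1,2,0,1,0),(1,2,0,0,0,1),(1,2,1,0,0,1),(2,0,1,0,1,1),(2,0,2,0,1,0)],
[(0,1,0,0,0,1),(0,1,1,0,1,0),(1,2,0,0,0,1),(1,2,1,0,0,1),(2,0,2,0,1,0),(2,0,2,0,1,0)],
[(0,1,0,0,0,1),(0,1,2,0,1,1),(1,2,0,0,0,1),(1,2,1,0,0,0),(2,0,1,0,1,0),(2,0,2,0,1,0)],
[(0,1,0,0,0,0),(0,2,1,0,0,0),(1,0,2,0,1,0),(1,2,0,0,0,0),(2,0,1,0,1,0),(2,1,2,0,1,0)],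
[(0,1,0,0,0,1),(0,2,1,0,0,1),(1,0,2,0,1,0),(1,2,0,0,0,0),(2,0,1,0,1,1),(2,1,2,0,1,0)],
[(0,1,0,0,0,1),(0,1,1,0,1,1),(1,2,0,0,0,1),(1,2,1,0,0,0),(2,0,2,0,1,0),(2,0,2,0,1,0)],
[(0,1,0,0,0,1),(0,2,1,0,0,0),(1,0,2,0,1,1),(1,2,0,0,0,1),(2,0,1,0,1,0),(2,1,2,0,1,0)],
[(0,1,2,0,0,0),(0,2,1,0,1,0),(1,0,2,0,1,0),(1,2,0,0,0,0),(2,0,1,0,1,0),(2,1,0,0,0,0)],
[(0,1,0,0,0,0),(0,1,0,0,0,1),(1,2,2,0,0,0),(1,2,2,0,1,0),(2,0,1,0,1,1),(2,0,1,0,1,1)],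
[(0,1,2,0,0,0),(0,2,1,0,1,0),(1,0,2,0,1,0),(1,2,0,0,0,1),(2,0,1,0,1,1),(2,1,0,0,0,1)],
[(0,1,2,0,0,0),(0,2,1,0,1,0),(1,0,2,0,1,1),(1,2,0,0,0,1),(2,0,1,0,1,0),(2,1,0,0,0,1)],
[(0,1,2,0,0,0),(0,2,1,0,1,0),(1,0,1,0,1,0),(1,2,0,0,0,0),(2,0,2,0,1,0),(2,1,0,0,0,0)],
[(0,1,0,0,0,0),(0,2,0,0,0,1),(1,0,1,0,1,1),(1,2,1,0,1,1),(2,0,2,0,1,0),(2,1,2,0,0,0)],
[(0,1,2,0,0,0),(0,2,1,0,1,0),(1,0,1,0,1,1),(1,2,0,0,0,1),(2,0,2,0,1,0),(2,1,0,0,0,1)],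
[(0,1,2,0,0,0),(0,2,1,0,1,0),(1,0,1,0,1,0),(1,2,0,0,0,1),(2,0,2,0,1,1),(2,1,0,0,0,1)],
[(0,1,0,0,0,0),(0,1,0,0,0,0),(1,2,2,0,0,0),(1,2,2,0,1,0),(2,0,1,0,1,0),(2,0,1,0,1,0)],
[(0,1,0,0,0,0),(0,1,2,0,0,0),(1,2,0,0,0,1),(1,2,2,0,1,0),(2,0,1,0,1,1),(2,0,1,0,1,1)],
[(0,1,0,0,0,1),(0,2,1,0,1,0),(1,0,2,0,1,0),(1,2,2,0,0,0),(2,0,1,0,1,1),(2,1,0,0,0,1)],
[(0,1,0,0,0,1),(0,1,0,0,0,1),(1,2,1,0,1,0),(1,2,2,0,0,0),(2,0,1,0,1,0),(2,0,2,0,1,1)],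
[(0,1,0,0,0,0),(0,2,0,0,0,0),(1,0,1,0,1,0),(1,2,1,0,1,0),(2,0,2,0,1,0),(2,1,2,0,0,0)],
[(0,1,0,0,0,1),(0,2,1,0,1,1),(1,0,1,0,1,1),(1,2,0,0,0,0),(2,0,2,0,1,0),(2,1,2,0,0,0)],
[(0,1,0,0,0,1),(0,1,0,0,0,1),(1,2,1,0,1,0),(1,2,2,0,0,0),(2,0,1,0,1,1),(2,0,2,0,1,0)],
[(0,1,0,0,0,1),(0,2,1,0,1,0),(1,0,1,0,1,0),(1,2,2,0,0,0),(2,0,2,0,1,1),(2,1,0,0,0,1)],
[(0,1,0,0,0,0),(0,1,2,0,0,0),(1,2,0,0,0,0),(1,2,1,0,1,0),(2,0,1,0,1,0),(2,0,2,0,1,0)],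
[(0,1,0,0,0,0),(0,1,2,0,0,0),(1,2,0,0,0,1),(1,2,1,0,1,1),(2,0,1,0,1,1),(2,0,2,0,1,0)],
[(0,1,0,0,0,1),(0,1,2,0,0,0),(1,2,0,0,0,1),(1,2,1,0,1,1),(2,0,1,0,1,0),(2,0,2,0,1,0)],
[(0,1,0,0,0,1),(0,1,0,0,0,1),(1,2,1,0,1,0),(1,2,2,0,0,1),(2,0,1,0,1,0),(2,0,2,0,1,0)],
[(0,1,0,0,0,0),(0,1,0,0,0,0),(1,2,2,0,0,0),(1,2,2,0,1,0),(2,0,1,0,1,0),(2,0,1,0,1,0)],
[(0,1,0,0,0,1),(0,2,1,0,1,1),(1,0,2,0,1,0),(1,2,0,0,0,0),(2,0,1,0,1,1),(2,1,2,0,0,0)],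
[(0,1,0,0,0,1),(0,1,0,0,0,1),(1,2,1,0,1,1),(1,2,2,0,0,0),(2,0,1,0,1,0),(2,0,2,0,1,0)],
[(0,1,0,0,0,1),(0,1,2,0,0,0),(1,2,0,0,0,1),(1,2,2,0,1,1),(2,0,1,0,1,0),(2,0,1,0,1,0)],
[(0,1,2,0,0,0),(0,2,1,1,0,0),(1,0,2,1,0,0),(1,2,0,1,0,0),(2,0,1,0,0,0),(2,1,0,0,0,0)],
[(0,1,2,0,0,0),(0,2,1,1,0,1),(1,0,2,1,0,0),(1,2,0,1,0,0),(2,0,1,0,0,1),(2,1,0,0,0,1)],
[(0,0,2,0,0,0),(0,0,2,1,0,0),(1,2,1,1,0,0),(1,2,1,1,0,1),(2,1,0,0,0,1),(2,1,0,0,0,1)],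
[(0,0,1,0,0,0),(0,0,1,1,0,0),(1,2,0,1,0,1),(1,2,0,1,0,1),(2,1,2,0,0,0),(2,1,2,0,0,1)],
[(0,0,1,0,0,0),(0,0,1,1,0,0),(1,2,0,1,0,0),(1,2,0,1,0,0),(2,1,2,0,0,0),(2,1,2,0,0,0)],
[(0,0,1,0,0,1),(0,0,2,1,0,0),(1,2,0,1,0,1),(1,2,1,1,0,1),(2,1,0,0,0,0),(2,1,2,0,0,0)],
[(0,0,1,0,0,0),(0,0,2,1,0,0),(1,2,0,1,0,1),(1,2,1,1,0,1),(2,1,0,0,0,1),(2,1,2,0,0,0)],
[(0,0,1,0,0,0),(0,0,2,1,0,0),(1,2,0,1,0,1),(1,2,1,1,0,0),(2,1,0,0,0,1),(2,1,2,0,0,1)],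
[(0,0,2,0,0,0),(0,0,2,1,0,0),(1,2,1,1,0,0),(1,2,1,1,0,0),(2,1,0,0,0,0),(2,1,0,0,0,0)],
[(0,0,2,1,0,0),(0,1,2,0,0,0),(1,2,0,1,0,0),(1,2,1,1,0,1),(2,0,1,0,0,1),(2,1,0,0,0,1)],
[(0,0,2,0,0,0),(0,2,1,1,0,1),(1,0,2,1,0,0),(1,2,1,1,0,0),(2,1,0,0,0,1),(2,1,0,0,0,1)],
[(0,0,2,0,0,1),(0,2,0,1,0,1),(1,0,1,1,0,0),(1,2,1,1,0,0),(2,1,0,0,0,1),(2,1,2,0,0,0)],
[(0,0,1,0,0,0),(0,2,0,1,0,0),(1,0,2,1,0,0),(1,2,1,1,0,0),(2,1,0,0,0,0),(2,1,2,0,0,0)],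
[(0,0,1,0,0,1),(0,0,1,1,0,1),(1,2,0,1,0,0),(1,2,0,1,0,1),(2,1,2,0,0,0),(2,1,2,0,0,0)],
[(0,0,1,0,0,1),(0,2,0,1,0,1),(1,0,2,1,0,0),(1,2,1,1,0,0),(2,1,0,0,0,1),(2,1,2,0,0,0)],
[(0,0,1,0,0,0),(0,2,0,1,0,1),(1,0,2,1,0,0),(1,2,1,1,0,0),(2,1,0,0,0,1),(2,1,2,0,0,1)],
[(0,0,2,1,0,0),(0,1,0,0,0,0),(1,2,0,1,0,0),(1,2,1,1,0,0),(2,0,1,0,0,0),(2,1,2,0,0,0)],
[(0,0,2,0,0,0),(0,0,2,1,0,0),(1,2,1,1,0,1),(1,2,1,1,0,1),(2,1,0,0,0,0),(2,1,0,0,0,1)],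
[(0,0,1,0,0,0),(0,0,1,1,0,1),(1,2,0,1,0,1),(1,2,0,1,0,1),(2,1,2,0,0,0),(2,1,2,0,0,0)],
[(0,0,2,1,0,1),(0,1,0,0,0,1),(1,2,0,1,0,1),(1,2,1,1,0,0),(2,0,1,0,0,0),(2,1,2,0,0,0)],
[(0,0,1,0,0,0),(0,0,1,1,0,0),(1,2,0,1,0,0),(1,2,0,1,0,0),(2,1,2,0,0,0),(2,1,2,0,0,0)],
[(0,0,1,0,0,1),(0,2,1,1,0,1),(1,0,2,1,0,0),(1,2,0,1,0,0),(2,1,0,0,0,1),(2,1,2,0,0,0)],
[(0,0,1,0,0,1),(0,2,0,1,0,1),(1,0,1,1,0,0),(1,2,0,1,0,1),(2,1,2,0,0,0),(2,1,2,0,0,0)],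
[(0,0,1,1,0,0),(0,1,2,0,0,1),(1,2,0,1,0,1),(1,2,0,1,0,1),(2,0,1,0,0,0),(2,1,2,0,0,0)],
[(0,1,2,0,1,0),(0,2,1,1,0,0),(1,0,2,1,1,0),(1,2,0,1,0,0),(2,0,1,0,0,0),(2,1,0,0,1,0)],
[(0,1,2,0,1,0),(0,2,1,1,0,1),(1,0,2,1,1,0),(1,2,0,1,0,0),(2,0,1,0,0,1),(2,1,0,0,1,1)],
[(0,0,2,1,1,0),(0,1,2,0,1,0),(1,2,0,1,0,1),(1,2,1,1,0,0),(2,0,1,0,0,1),(2,1,0,0,1,1)],
[(0,0,1,0,0,0),(0,2,1,1,0,0),(1,0,0,1,1,1),(1,2,0,1,0,1),(2,1,2,0,1,0),(2,1,2,0,1,1)],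
[(0,0,1,0,0,0),(0,0,2,1,1,0),(1,2,0,1,0,0),(1,2,1,1,0,0),(2,1,0,0,1,0),(2,1,2,0,1,0)],
[(0,0,0,0,0,0),(0,0,0,1,1,1),(1,2,1,1,0,1),(1,2,1,1,0,1),(2,1,2,0,1,0),(2,1,2,0,1,0)],
[(0,0,1,0,0,0),(0,0,2,1,1,0),(1,2,0,1,0,1),(1,2,1,1,0,1),(2,1,0,0,1,1),(2,1,2,0,1,0)],
[(0,0,1,0,0,0),(0,0,2,1,1,0),(1,2,0,1,0,1),(1,2,1,1,0,0),(2,1,0,0,1,1),(2,1,2,0,1,1)],
[(0,0,2,1,1,0),(0,1,2,0,1,0),(1,2,1,1,0,0),(1,2,1,1,0,0),(2,0,0,0,0,0),(2,1,0,0,1,0)],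
[(0,0,2,1,1,0),(0,1,2,0,1,0),(1,2,0,1,0,0),(1,2,1,1,0,1),(2,0,1,0,0,1),(2,1,0,0,1,1)],
[(0,1,2,0,1,0),(0,2,0,1,0,1),(1,0,2,1,1,0),(1,2,1,1,0,0),(2,0,1,0,0,1),(2,1,0,0,1,1)],
[(0,0,0,0,0,1),(0,0,0,1,1,1),(1,2,1,1,0,0),(1,2,1,1,0,0),(2,1,2,0,1,0),(2,1,2,0,1,1)],
[(0,0,0,0,0,0),(0,0,0,1,1,0),(1,2,1,1,0,0),(1,2,1,1,0,0),(2,1,2,0,1,0),(2,1,2,0,1,0)],
[(0,0,0,0,0,1),(0,2,1,1,0,1),(1,0,0,1,1,0),(1,2,1,1,0,1),(2,1,2,0,1,0),(2,1,2,0,1,0)],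
[(0,0,0,0,0,1),(0,2,1,1,0,1),(1,0,2,1,1,0),(1,2,1,1,0,0),(2,1,0,0,1,1),(2,1,2,0,1,0)],
[(0,0,0,0,0,1),(0,0,2,1,1,0),(1,2,1,1,0,0),(1,2,1,1,0,0),(2,1,0,0,1,1),(2,1,2,0,1,1)],
[(0,0,0,0,0,0),(0,0,0,1,1,0),(1,2,1,1,0,0),(1,2,1,1,0,0),(2,1,2,0,1,0),(2,1,2,0,1,0)],
[(0,0,0,0,0,0),(0,0,2,1,1,0),(1,2,1,1,0,1),(1,2,1,1,0,1),(2,1,0,0,1,1),(2,1,2,0,1,0)],
[(0,0,0,0,0,1),(0,2,1,1,0,0),(1,0,0,1,1,1),(1,2,1,1,0,1),(2,1,2,0,1,0),(2,1,2,0,1,0)],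
[(0,0,0,1,1,1),(0,1,2,0,1,1),(1,2,0,1,0,1),(1,2,1,1,0,0),(2,0,1,0,0,0),(2,1,2,0,1,0)],
[(0,0,1,0,0,0),(0,2,1,1,0,0),(1,0,0,1,1,0),(1,2,0,1,0,0),(2,1,2,0,1,0),(2,1,2,0,1,0)],
[(0,0,1,0,0,1),(0,2,1,1,0,1),(1,0,2,1,1,0),(1,2,0,1,0,0),(2,1,0,0,1,1),(2,1,2,0,1,0)],
[(0,0,0,0,0,1),(0,0,0,1,1,1),(1,2,1,1,0,0),(1,2,1,1,0,1),(2,1,2,0,1,0),(2,1,2,0,1,0)],
[(0,1,0,0,1,1),(0,2,1,1,0,0),(1,0,2,1,1,1),(1,2,0,1,0,1),(2,0,1,0,0,0),(2,1,2,0,1,0)],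
[(0,0,2,0,1,0),(0,0,2,1,1,0),(1,2,0,1,0,0),(1,2,0,1,0,0),(2,1,1,0,0,0),(2,1,1,0,1,0)],
[(0,0,2,0,1,0),(0,2,0,1,0,1),(1,0,2,1,1,0),(1,2,0,1,0,0),(2,1,1,0,0,1),(2,1,1,0,1,1)],
[(0,0,2,0,1,0),(0,0,2,1,1,0),(1,2,0,1,0,1),(1,2,1,1,0,0),(2,1,0,0,0,1),(2,1,1,0,1,1)],
[(0,0,1,0,1,0),(0,0,2,1,1,0),(1,2,0,1,0,1),(1,2,0,1,0,1),(2,1,1,0,0,0),(2,1,2,0,1,1)],
[(0,0,1,0,1,0),(0,0,2,1,1,0),(1,2,0,1,0,0),(1,2,1,1,0,0),(2,1,0,0,0,0),(2,1,2,0,1,0)],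
[(0,0,1,0,1,1),(0,0,2,1,1,0),(1,2,0,1,0,1),(1,2,1,1,0,1),(2,1,0,0,0,0),(2,1,2,0,1,0)],
[(0,0,1,0,1,0),(0,0,2,1,1,0),(1,2,0,1,0,1),(1,2,0,1,0,1),(2,1,1,0,0,1),(2,1,2,0,1,0)],
[(0,0,1,0,1,0),(0,0,2,1,1,0),(1,2,0,1,0,1),(1,2,1,1,0,0),(2,1,0,0,0,1),(2,1,2,0,1,1)],
[(0,0,2,0,1,0),(0,2,0,1,0,0),(1,0,2,1,1,0),(1,2,1,1,0,0),(2,1,0,0,0,0),(2,1,1,0,1,0)],
[(0,0,2,0,1,0),(0,0,2,1,1,0),(1,2,0,1,0,0),(1,2,0,1,0,1),(2,1,1,0,0,1),(2,1,1,0,1,1)],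
[(0,0,2,0,1,0),(0,2,0,1,0,1),(1,0,2,1,1,0),(1,2,1,1,0,0),(2,1,0,0,0,1),(2,1,1,0,1,1)],
[(0,0,2,0,1,1),(0,2,0,1,0,1),(1,0,1,1,1,0),(1,2,1,1,0,0),(2,1,0,0,0,1),(2,1,2,0,1,0)],
[(0,0,1,0,1,0),(0,2,0,1,0,0),(1,0,2,1,1,0),(1,2,1,1,0,0),(2,1,0,0,0,0),(2,1,2,0,1,0)],
[(0,0,1,0,1,1),(0,2,0,1,0,1),(1,0,2,1,1,0),(1,2,1,1,0,1),(2,1,0,0,0,0),(2,1,2,0,1,0)],
[(0,0,1,0,1,1),(0,2,0,1,0,1),(1,0,2,1,1,0),(1,2,1,1,0,0),(2,1,0,0,0,1),(2,1,2,0,1,0)],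
[(0,0,1,0,1,0),(0,2,0,1,0,1),(1,0,2,1,1,0),(1,2,1,1,0,0),(2,1,0,0,0,1),(2,1,2,0,1,1)],
[(0,0,2,0,1,0),(0,0,2,1,1,0),(1,2,0,1,0,0),(1,2,0,1,0,0),(2,1,1,0,0,0),(2,1,1,0,1,0)],
[(0,0,2,0,1,0),(0,0,2,1,1,0),(1,2,0,1,0,1),(1,2,1,1,0,1),(2,1,0,0,0,0),(2,1,1,0,1,1)],
[(0,0,1,0,1,1),(0,0,2,1,1,0),(1,2,0,1,0,1),(1,2,0,1,0,1),(2,1,1,0,0,0),(2,1,2,0,1,0)],
[(0,0,2,0,1,1),(0,2,0,1,0,1),(1,0,1,1,1,0),(1,2,0,1,0,1),(2,1,1,0,0,0),(2,1,2,0,1,0)],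
[(0,0,1,0,1,0),(0,2,0,1,0,0),(1,0,2,1,1,0),(1,2,0,1,0,0),(2,1,1,0,0,0),(2,1,2,0,1,0)],
[(0,0,1,0,1,1),(0,2,0,1,0,1),(1,0,2,1,1,0),(1,2,0,1,0,0),(2,1,1,0,0,1),(2,1,2,0,1,0)],
[(0,0,1,0,1,1),(0,2,0,1,0,1),(1,0,2,1,1,0),(1,2,0,1,0,1),(2,1,1,0,0,0),(2,1,2,0,1,0)],
[(0,0,1,0,1,0),(0,0,2,1,1,1),(1,2,0,1,0,1),(1,2,0,1,0,1),(2,1,1,0,0,0),(2,1,2,0,1,0)],
[(0,0,1,0,1,0),(0,0,1,1,1,0),(1,2,2,1,0,0),(1,2,2,1,1,0),(2,1,0,0,0,0),(2,1,0,0,0,0)],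
[(0,0,1,1,1,1),(0,1,0,0,0,0),(1,2,2,1,0,0),(1,2,2,1,1,0),(2,0,1,0,1,1),(2,1,0,0,0,1)],
[(0,0,1,0,1,0),(0,0,2,1,1,0),(1,2,1,1,1,1),(1,2,2,1,0,0),(2,1,0,0,0,1),(2,1,0,0,0,1)],
[(0,0,1,0,1,0),(0,0,1,1,1,0),(1,2,0,1,0,1),(1,2,2,1,1,1),(2,1,0,0,0,1),(2,1,2,0,0,0)],
[(0,0,1,0,1,0),(0,0,2,1,1,0),(1,2,0,1,0,0),(1,2,1,1,1,0),(2,1,0,0,0,0),(2,1,2,0,0,0)],
[(0,0,1,0,1,1),(0,0,2,1,1,0),(1,2,0,1,0,1),(1,2,1,1,1,1),(2,1,0,0,0,0),(2,1,2,0,0,0)],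
[(0,0,1,0,1,0),(0,0,2,1,1,0),(1,2,0,1,0,1),(1,2,1,1,1,1),(2,1,0,0,0,1),(2,1,2,0,0,0)],
[(0,0,1,0,1,0),(0,0,1,1,1,0),(1,2,0,1,0,1),(1,2,2,1,1,0),(2,1,0,0,0,1),(2,1,2,0,0,1)],
[(0,0,2,0,1,0),(0,2,2,1,0,0),(1,0,1,1,1,0),(1,2,1,1,1,0),(2,1,0,0,0,0),(2,1,0,0,0,0)],
[(0,0,2,1,1,0),(0,1,0,0,0,0),(1,2,1,1,1,1),(1,2,2,1,0,0),(2,0,1,0,1,1),(2,1,0,0,0,1)],
[(0,0,1,0,1,0),(0,0,1,1,1,1),(1,2,2,1,0,0),(1,2,2,1,1,0),(2,1,0,0,0,1),(2,1,0,0,0,1)],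
[(0,0,2,0,1,1),(0,2,0,1,0,1),(1,0,1,1,1,0),(1,2,1,1,1,0),(2,1,0,0,0,1),(2,1,2,0,0,0)],
[(0,0,1,0,1,0),(0,0,1,1,1,0),(1,2,2,1,0,0),(1,2,2,1,1,0),(2,1,0,0,0,0),(2,1,0,0,0,0)],
[(0,0,1,0,1,1),(0,0,1,1,1,1),(1,2,0,1,0,1),(1,2,2,1,1,0),(2,1,0,0,0,0),(2,1,2,0,0,0)],
[(0,0,1,0,1,1),(0,2,0,1,0,1),(1,0,1,1,1,0),(1,2,2,1,1,0),(2,1,0,0,0,1),(2,1,2,0,0,0)],
[(0,0,1,0,1,0),(0,0,2,1,1,1),(1,2,1,1,1,0),(1,2,2,1,0,0),(2,1,0,0,0,1),(2,1,0,0,0,1)],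
[(0,0,2,1,1,0),(0,1,0,0,0,0),(1,2,0,1,0,0),(1,2,1,1,1,0),(2,0,1,0,1,0),(2,1,2,0,0,0)],
[(0,0,2,0,1,0),(0,2,0,1,0,0),(1,0,1,1,1,1),(1,2,1,1,1,1),(2,1,0,0,0,1),(2,1,2,0,0,0)],
[(0,0,1,1,1,0),(0,1,0,0,0,1),(1,2,0,1,0,1),(1,2,1,1,1,1),(2,0,2,0,1,0),(2,1,2,0,0,0)],
[(0,0,2,1,1,1),(0,1,0,0,0,1),(1,2,0,1,0,1),(1,2,1,1,1,0),(2,0,1,0,1,0),(2,1,2,0,0,0)],
[(0,0,1,1,1,0),(0,1,0,0,0,0),(1,2,0,1,0,0),(1,2,2,1,1,0),(2,0,1,0,1,0),(2,1,2,0,0,0)],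
[(0,0,1,0,1,1),(0,0,1,1,1,1),(1,2,0,1,0,0),(1,2,2,1,1,0),(2,1,0,0,0,1),(2,1,2,0,0,0)],
[(0,0,1,1,1,1),(0,1,0,0,0,1),(1,2,0,1,0,1),(1,2,1,1,1,0),(2,0,2,0,1,0),(2,1,2,0,0,0)],
[(0,0,1,1,1,0),(0,1,0,0,0,1),(1,2,0,1,0,1),(1,2,2,1,1,1),(2,0,1,0,1,0),(2,1,2,0,0,0)],
[(0,1,2,1,0,0),(0,2,1,1,0,0),(1,0,2,0,0,0),(1,2,0,1,0,0),(2,0,1,0,0,0),(2,1,0,0,0,0)],
[(0,1,2,1,0,0),(0,2,0,1,0,1),(1,1,2,0,0,0),(1,2,0,1,0,0),(2,0,1,0,0,1),(2,0,1,0,0,1)],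
[(0,1,2,1,0,0),(0,2,1,1,0,0),(1,0,2,0,0,0),(1,2,0,1,0,1),(2,0,1,0,0,1),(2,1,0,0,0,1)],
[(0,1,2,1,0,0),(0,2,1,1,0,0),(1,0,2,0,0,1),(1,2,0,1,0,1),(2,0,1,0,0,0),(2,1,0,0,0,1)],
[(0,1,2,1,0,0),(0,2,1,1,0,0),(1,0,1,0,0,0),(1,2,0,1,0,0),(2,0,2,0,0,0),(2,1,0,0,0,0)],
[(0,1,0,1,0,0),(0,2,0,1,0,1),(1,0,1,0,0,1),(1,2,1,1,0,1),(2,0,2,0,0,0),(2,1,2,0,0,0)],
[(0,1,2,1,0,0),(0,2,1,1,0,0),(1,0,1,0,0,1),(1,2,0,1,0,1),(2,0,2,0,0,0),(2,1,0,0,0,1)],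
[(0,1,2,1,0,0),(0,2,1,1,0,0),(1,0,1,0,0,0),(1,2,0,1,0,1),(2,0,2,0,0,1),(2,1,0,0,0,1)],
[(0,1,2,1,0,0),(0,2,0,1,0,0),(1,0,2,0,0,0),(1,2,1,1,0,0),(2,0,1,0,0,0),(2,1,0,0,0,0)],
[(0,1,2,1,0,0),(0,2,0,1,0,0),(1,0,2,0,0,0),(1,2,1,1,0,1),(2,0,1,0,0,1),(2,1,0,0,0,1)],
[(0,1,2,1,0,0),(0,2,0,1,0,1),(1,0,2,0,0,0),(1,2,1,1,0,0),(2,0,1,0,0,1),(2,1,0,0,0,1)],
[(0,1,0,1,0,1),(0,2,0,1,0,1),(1,0,1,0,0,0),(1,2,1,1,0,0),(2,0,2,0,0,0),(2,1,2,0,0,1)],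
[(0,1,0,1,0,0),(0,2,0,1,0,0),(1,0,1,0,0,0),(1,2,1,1,0,0),(2,0,2,0,0,0),(2,1,2,0,0,0)],
[(0,1,0,1,0,1),(0,2,1,1,0,1),(1,0,1,0,0,1),(1,2,0,1,0,0),(2,0,2,0,0,0),(2,1,2,0,0,0)],
[(0,1,0,1,0,1),(0,2,0,1,0,1),(1,0,2,0,0,0),(1,2,1,1,0,0),(2,0,1,0,0,1),(2,1,2,0,0,0)],
[(0,1,0,1,0,1),(0,2,1,1,0,0),(1,0,2,0,0,0),(1,2,1,1,0,0),(2,0,2,0,0,1),(2,1,0,0,0,1)],
[(0,1,0,1,0,0),(0,2,0,1,0,0),(1,0,1,0,0,0),(1,2,1,1,0,0),(2,0,2,0,0,0),(2,1,2,0,0,0)],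
[(0,1,2,1,0,0),(0,2,0,1,0,0),(1,0,1,0,0,1),(1,2,0,1,0,1),(2,0,1,0,0,1),(2,1,2,0,0,0)],
[(0,1,0,1,0,1),(0,2,1,1,0,0),(1,0,1,0,0,1),(1,2,0,1,0,1),(2,0,2,0,0,0),(2,1,2,0,0,0)],
[(0,1,0,1,0,1),(0,2,0,1,0,1),(1,0,2,0,0,1),(1,2,1,1,0,0),(2,0,1,0,0,0),(2,1,2,0,0,0)],
[(0,1,0,1,0,0),(0,2,1,1,0,0),(1,0,2,0,0,0),(1,2,0,1,0,0),(2,0,1,0,0,0),(2,1,2,0,0,0)],
[(0,1,0,1,0,1),(0,2,1,1,0,1),(1,0,2,0,0,0),(1,2,0,1,0,0),(2,0,1,0,0,1),(2,1,2,0,0,0)],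
[(0,1,0,1,0,1),(0,2,0,1,0,1),(1,0,1,0,0,0),(1,2,1,1,0,1),(2,0,2,0,0,0),(2,1,2,0,0,0)],
[(0,1,0,1,0,1),(0,2,1,1,0,0),(1,0,2,0,0,1),(1,2,0,1,0,1),(2,0,1,0,0,0),(2,1,2,0,0,0)],
[(0,1,2,1,1,0),(0,2,1,1,0,0),(1,0,2,0,1,0),(1,2,0,1,0,0),(2,0,1,0,0,0),(2,1,0,0,1,0)],
[(0,1,2,1,1,0),(0,2,1,1,0,1),(1,0,2,0,1,0),(1,2,0,1,0,0),(2,0,1,0,0,1),(2,1,0,0,1,1)],
[(0,1,2,1,1,0),(0,2,1,1,0,0),(1,0,2,0,1,0),(1,2,0,1,0,1),(2,0,1,0,0,1),(2,1,0,0,1,1)],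
[(0,1,2,1,1,0),(0,2,1,1,0,0),(1,0,0,0,1,1),(1,2,0,1,0,1),(2,0,1,0,0,0),(2,1,2,0,1,1)],
[(0,1,2,1,1,0),(0,2,1,1,0,0),(1,0,0,0,0,0),(1,2,1,1,0,0),(2,0,0,0,1,0),(2,1,2,0,1,0)],
[(0,1,0,1,1,0),(0,2,0,1,0,1),(1,0,1,0,0,1),(1,2,1,1,0,1),(2,0,2,0,1,0),(2,1,2,0,1,0)],
[(0,1,2,1,1,0),(0,2,1,1,0,0),(1,0,0,0,0,1),(1,2,1,1,0,1),(2,0,0,0,1,1),(2,1,2,0,1,0)],
[(0,1,2,1,1,0),(0,2,1,1,0,0),(1,0,0,0,0,1),(1,2,1,1,0,0),(2,0,0,0,1,1),(2,1,2,0,1,1)],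
[(0,1,2,1,1,0),(0,2,0,1,0,0),(1,0,2,0,1,0),(1,2,1,1,0,0),(2,0,1,0,0,0),(2,1,0,0,1,0)],
[(0,1,2,1,1,0),(0,2,0,1,0,0),(1,0,2,0,1,0),(1,2,1,1,0,1),(2,0,1,0,0,1),(2,1,0,0,1,1)],
[(0,1,2,1,1,0),(0,2,0,1,0,1),(1,0,2,0,1,0),(1,2,1,1,0,0),(2,0,1,0,0,1),(2,1,0,0,1,1)],
[(0,1,0,1,1,1),(0,2,0,1,0,1),(1,0,1,0,0,0),(1,2,1,1,0,0),(2,0,2,0,1,0),(2,1,2,0,1,1)],
[(0,1,0,1,1,0),(0,2,0,1,0,0),(1,0,1,0,0,0),(1,2,1,1,0,0),(2,0,2,0,1,0),(2,1,2,0,1,0)],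
[(0,1,0,1,1,1),(0,2,1,1,0,1),(1,0,0,0,0,0),(1,2,1,1,0,1),(2,0,2,0,1,0),(2,1,2,0,1,0)],
[(0,1,0,1,1,1),(0,2,0,1,0,1),(1,0,2,0,1,0),(1,2,1,1,0,0),(2,0,1,0,0,1),(2,1,2,0,1,0)],
[(0,1,0,1,1,1),(0,2,1,1,0,0),(1,0,2,0,1,0),(1,2,1,1,0,0),(2,0,0,0,0,1),(2,1,2,0,1,1)],
[(0,1,0,1,1,0),(0,2,0,1,0,0),(1,0,1,0,0,0),(1,2,1,1,0,0),(2,0,2,0,1,0),(2,1,2,0,1,0)],
[(0,1,2,1,1,0),(0,2,0,1,0,0),(1,0,0,0,1,1),(1,2,1,1,0,1),(2,0,1,0,0,1),(2,1,2,0,1,0)],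
[(0,1,0,1,1,1),(0,2,1,1,0,0),(1,0,0,0,0,1),(1,2,1,1,0,1),(2,0,2,0,1,0),(2,1,2,0,1,0)],
[(0,1,0,1,1,1),(0,2,0,1,0,1),(1,0,2,0,1,1),(1,2,1,1,0,0),(2,0,1,0,0,0),(2,1,2,0,1,0)],
[(0,1,0,1,1,0),(0,2,1,1,0,0),(1,0,2,0,1,0),(1,2,0,1,0,0),(2,0,1,0,0,0),(2,1,2,0,1,0)],
[(0,1,0,1,1,1),(0,2,1,1,0,1),(1,0,2,0,1,0),(1,2,0,1,0,0),(2,0,1,0,0,1),(2,1,2,0,1,0)],
[(0,1,0,1,1,1),(0,2,0,1,0,1),(1,0,1,0,0,0),(1,2,1,1,0,1),(2,0,2,0,1,0),(2,1,2,0,1,0)],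
[(0,1,0,1,1,1),(0,2,1,1,0,0),(1,0,2,0,1,1),(1,2,0,1,0,1),(2,0,1,0,0,0),(2,1,2,0,1,0)],
[(0,1,2,1,1,0),(0,2,1,1,0,0),(1,0,2,0,1,0),(1,2,0,1,0,0),(2,0,1,0,1,0),(2,1,0,0,0,0)],
[(0,1,2,1,1,0),(0,2,0,1,0,1),(1,0,2,0,1,0),(1,2,0,1,0,0),(2,0,1,0,1,1),(2,1,1,0,0,1)],
[(0,1,2,1,1,0),(0,2,1,1,0,0),(1,0,2,0,1,0),(1,2,0,1,0,1),(2,0,1,0,1,1),(2,1,0,0,0,1)],
[(0,1,1,1,1,0),(0,2,1,1,0,0),(1,0,2,0,1,1),(1,2,0,1,0,1),(2,0,2,0,1,0),(2,1,0,0,0,1)],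
[(0,1,1,1,1,0),(0,2,1,1,0,0),(1,1,0,0,0,0),(1,2,0,1,0,0),(2,0,2,0,1,0),(2,0,2,0,1,0)],
[(0,1,0,1,0,0),(0,2,0,1,0,1),(1,0,1,0,1,1),(1,2,1,1,0,1),(2,0,2,0,1,0),(2,1,2,0,1,0)],
[(0,1,2,1,1,0),(0,2,1,1,0,0),(1,0,1,0,1,1),(1,2,0,1,0,1),(2,0,2,0,1,0),(2,1,0,0,0,1)],
[(0,1,1,1,1,0),(0,2,1,1,0,0),(1,0,2,0,1,0),(1,2,0,1,0,1),(2,0,2,0,1,1),(2,1,0,0,0,1)],
[(0,1,2,1,1,0),(0,2,0,1,0,0),(1,0,2,0,1,0),(1,2,1,1,0,0),(2,0,1,0,1,0),(2,1,0,0,0,0)],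
[(0,1,2,1,1,0),(0,2,0,1,0,0),(1,0,2,0,1,0),(1,2,0,1,0,1),(2,0,1,0,1,1),(2,1,1,0,0,1)],
[(0,1,2,1,1,0),(0,2,0,1,0,1),(1,0,2,0,1,0),(1,2,1,1,0,0),(2,0,1,0,1,1),(2,1,0,0,0,1)],
[(0,1,0,1,0,1),(0,2,0,1,0,1),(1,0,1,0,1,0),(1,2,1,1,0,0),(2,0,2,0,1,0),(2,1,2,0,1,1)],
[(0,1,0,1,0,0),(0,2,0,1,0,0),(1,0,1,0,1,0),(1,2,1,1,0,0),(2,0,2,0,1,0),(2,1,2,0,1,0)],
[(0,1,0,1,0,1),(0,2,1,1,0,1),(1,0,1,0,1,1),(1,2,0,1,0,0),(2,0,2,0,1,0),(2,1,2,0,1,0)],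
[(0,1,0,1,0,1),(0,2,0,1,0,1),(1,0,2,0,1,0),(1,2,1,1,0,0),(2,0,1,0,1,1),(2,1,2,0,1,0)],
[(0,1,1,1,1,0),(0,2,0,1,0,1),(1,0,2,0,1,0),(1,2,1,1,0,0),(2,0,2,0,1,1),(2,1,0,0,0,1)],
[(0,1,0,1,0,0),(0,2,0,1,0,0),(1,0,1,0,1,0),(1,2,1,1,0,0),(2,0,2,0,1,0),(2,1,2,0,1,0)],
[(0,1,2,1,1,0),(0,2,0,1,0,0),(1,0,1,0,1,1),(1,2,0,1,0,1),(2,0,2,0,1,0),(2,1,1,0,0,1)],
[(0,1,0,1,0,1),(0,2,1,1,0,0),(1,0,1,0,1,1),(1,2,0,1,0,1),(2,0,2,0,1,0),(2,1,2,0,1,0)],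
[(0,1,0,1,0,1),(0,2,0,1,0,1),(1,0,2,0,1,1),(1,2,1,1,0,0),(2,0,1,0,1,0),(2,1,2,0,1,0)],
[(0,1,0,1,0,0),(0,2,1,1,0,0),(1,0,2,0,1,0),(1,2,0,1,0,0),(2,0,1,0,1,0),(2,1,2,0,1,0)],
[(0,1,0,1,0,1),(0,2,1,1,0,1),(1,0,2,0,1,0),(1,2,0,1,0,0),(2,0,1,0,1,1),(2,1,2,0,1,0)],
[(0,1,0,1,0,1),(0,2,0,1,0,1),(1,0,1,0,1,0),(1,2,1,1,0,1),(2,0,2,0,1,0),(2,1,2,0,1,0)],
[(0,1,0,1,0,1),(0,2,1,1,0,0),(1,0,2,0,1,1),(1,2,0,1,0,1),(2,0,1,0,1,0),(2,1,2,0,1,0)],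
[(0,1,2,1,0,0),(0,2,1,1,1,0),(1,0,2,0,1,0),(1,2,0,1,0,0),(2,0,1,0,1,0),(2,1,0,0,0,0)],
[(0,1,0,1,0,0),(0,2,0,1,0,1),(1,1,2,0,0,0),(1,2,2,1,1,0),(2,0,1,0,1,1),(2,0,1,0,1,1)],
[(0,1,2,1,0,0),(0,2,1,1,1,0),(1,0,2,0,1,0),(1,2,0,1,0,1),(2,0,1,0,1,1),(2,1,0,0,0,1)],
[(0,1,2,1,0,0),(0,2,1,1,1,0),(1,0,2,0,1,1),(1,2,0,1,0,1),(2,0,1,0,1,0),(2,1,0,0,0,1)],
[(0,1,2,1,0,0),(0,2,1,1,1,0),(1,0,1,0,1,0),(1,2,0,1,0,0),(2,0,2,0,1,0),(2,1,0,0,0,0)],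
[(0,1,0,1,0,0),(0,2,0,1,0,1),(1,0,1,0,1,1),(1,2,1,1,1,1),(2,0,2,0,1,0),(2,1,2,0,0,0)],
[(0,1,2,1,0,0),(0,2,1,1,1,0),(1,0,1,0,1,1),(1,2,0,1,0,1),(2,0,2,0,1,0),(2,1,0,0,0,1)],
[(0,1,2,1,0,0),(0,2,1,1,1,0),(1,0,1,0,1,0),(1,2,0,1,0,1),(2,0,2,0,1,1),(2,1,0,0,0,1)],
[(0,1,0,1,0,0),(0,2,0,1,0,0),(1,1,2,0,0,0),(1,2,2,1,1,0),(2,0,1,0,1,0),(2,0,1,0,1,0)],
[(0,1,0,1,0,0),(0,2,2,1,0,0),(1,0,1,0,1,1),(1,2,2,1,1,0),(2,0,1,0,1,1),(2,1,0,0,0,1)],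
[(0,1,0,1,0,1),(0,2,1,1,1,0),(1,0,2,0,1,0),(1,2,2,1,0,0),(2,0,1,0,1,1),(2,1,0,0,0,1)],
[(0,1,0,1,0,1),(0,2,0,1,0,1),(1,0,1,0,1,0),(1,2,1,1,1,0),(2,0,2,0,1,0),(2,1,2,0,0,1)],
[(0,1,0,1,0,0),(0,2,0,1,0,0),(1,0,1,0,1,0),(1,2,1,1,1,0),(2,0,2,0,1,0),(2,1,2,0,0,0)],
[(0,1,0,1,0,1),(0,2,1,1,1,1),(1,0,1,0,1,1),(1,2,0,1,0,0),(2,0,2,0,1,0),(2,1,2,0,0,0)],
[(0,1,0,1,0,1),(0,2,0,1,0,1),(1,0,1,0,1,0),(1,2,2,1,1,0),(2,0,1,0,1,1),(2,1,2,0,0,0)],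
[(0,1,0,1,0,1),(0,2,1,1,1,0),(1,0,1,0,1,0),(1,2,2,1,0,0),(2,0,2,0,1,1),(2,1,0,0,0,1)],
[(0,1,0,1,0,0),(0,2,0,1,0,0),(1,0,1,0,1,0),(1,2,1,1,1,0),(2,0,2,0,1,0),(2,1,2,0,0,0)],
[(0,1,0,1,0,0),(0,2,2,1,0,0),(1,0,1,0,1,1),(1,2,1,1,1,1),(2,0,2,0,1,0),(2,1,0,0,0,1)],
[(0,1,0,1,0,1),(0,2,1,1,1,0),(1,0,1,0,1,1),(1,2,0,1,0,1),(2,0,2,0,1,0),(2,1,2,0,0,0)],
[(0,1,0,1,0,1),(0,2,0,1,0,1),(1,0,1,0,1,0),(1,2,2,1,1,1),(2,0,1,0,1,0),(2,1,2,0,0,0)],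
[(0,1,0,1,0,0),(0,2,0,1,0,0),(1,1,2,0,0,0),(1,2,2,1,1,0),(2,0,1,0,1,0),(2,0,1,0,1,0)],
[(0,1,0,1,0,1),(0,2,1,1,1,1),(1,0,2,0,1,0),(1,2,0,1,0,0),(2,0,1,0,1,1),(2,1,2,0,0,0)],
[(0,1,0,1,0,1),(0,2,0,1,0,1),(1,0,1,0,1,0),(1,2,1,1,1,1),(2,0,2,0,1,0),(2,1,2,0,0,0)],
[(0,1,0,1,0,1),(0,2,1,1,1,0),(1,0,2,0,1,1),(1,2,0,1,0,1),(2,0,1,0,1,0),(2,1,2,0,0,0)],
[(0,1,2,1,0,0),(0,2,1,1,0,0),(1,0,2,0,0,0),(1,2,0,0,0,0),(2,0,1,0,0,0),(2,1,0,1,0,0)],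
[(0,1,0,1,0,0),(0,1,0,1,0,1),(1,0,2,0,0,0),(1,0,2,0,0,0),(2,2,1,0,0,1),(2,2,1,1,0,1)],
[(0,1,2,1,0,0),(0,1,2,1,0,0),(1,0,1,0,0,0),(1,0,1,0,0,1),(2,2,0,0,0,1),(2,2,0,1,0,1)],
[(0,1,2,1,0,0),(0,2,1,1,0,0),(1,0,2,0,0,1),(1,2,0,0,0,1),(2,0,1,0,0,0),(2,1,0,1,0,1)],
[(0,1,2,1,0,0),(0,1,2,1,0,0),(1,0,1,0,0,0),(1,0,1,0,0,0),(2,2,0,0,0,0),(2,2,0,1,0,0)],
[(0,1,0,1,0,0),(0,2,0,1,0,1),(1,0,1,0,0,1),(1,2,1,0,0,1),(2,0,2,0,0,0),(2,1,2,1,0,0)],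
[(0,1,2,1,0,0),(0,1,2,1,0,0),(1,0,1,0,0,1),(1,2,0,0,0,1),(2,0,1,0,0,0),(2,2,0,1,0,1)],
[(0,1,2,1,0,0),(0,2,1,1,0,0),(1,0,1,0,0,0),(1,0,2,0,0,1),(2,1,0,1,0,1),(2,2,0,0,0,1)],
[(0,1,0,1,0,0),(0,1,0,1,0,0),(1,0,2,0,0,0),(1,0,2,0,0,0),(2,2,1,0,0,0),(2,2,1,1,0,0)],
[(0,1,0,1,0,0),(0,1,2,1,0,0),(1,0,1,0,0,1),(1,0,2,0,0,0),(2,2,0,0,0,1),(2,2,1,1,0,1)],
[(0,1,0,1,0,1),(0,1,2,1,0,0),(1,0,1,0,0,0),(1,0,2,0,0,0),(2,2,0,0,0,1),(2,2,1,1,0,1)],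
[(0,1,0,1,0,1),(0,1,0,1,0,1),(1,0,2,0,0,0),(1,2,1,0,0,0),(2,0,2,0,0,1),(2,2,1,1,0,0)],
[(0,1,0,1,0,0),(0,2,0,1,0,0),(1,0,1,0,0,0),(1,2,1,0,0,0),(2,0,2,0,0,0),(2,1,2,1,0,0)],
[(0,1,0,1,0,1),(0,2,1,1,0,1),(1,0,1,0,0,1),(1,0,2,0,0,0),(2,1,2,1,0,0),(2,2,0,0,0,0)],
[(0,1,0,1,0,1),(0,1,0,1,0,1),(1,0,2,0,0,0),(1,0,2,0,0,0),(2,2,1,0,0,0),(2,2,1,1,0,1)],
[(0,1,0,1,0,1),(0,1,2,1,0,0),(1,0,1,0,0,0),(1,2,1,0,0,0),(2,0,2,0,0,1),(2,2,0,1,0,1)],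
[(0,1,0,1,0,0),(0,1,2,1,0,0),(1,0,1,0,0,0),(1,2,0,0,0,0),(2,0,2,0,0,0),(2,2,1,1,0,0)],
[(0,1,0,1,0,0),(0,1,2,1,0,0),(1,0,1,0,0,1),(1,2,0,0,0,1),(2,0,2,0,0,0),(2,2,1,1,0,1)],
[(0,1,0,1,0,1),(0,1,2,1,0,0),(1,0,1,0,0,1),(1,2,0,0,0,1),(2,0,2,0,0,0),(2,2,1,1,0,0)],
[(0,1,0,1,0,1),(0,1,0,1,0,1),(1,0,2,0,0,0),(1,0,2,0,0,1),(2,2,1,0,0,0),(2,2,1,1,0,0)],
[(0,1,0,1,0,0),(0,1,0,1,0,0),(1,0,2,0,0,0),(1,0,2,0,0,0),(2,2,1,0,0,0),(2,2,1,1,0,0)],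
[(0,1,0,1,0,1),(0,2,1,1,0,1),(1,0,2,0,0,0),(1,0,2,0,0,0),(2,1,0,1,0,0),(2,2,1,0,0,1)],
[(0,1,0,1,0,1),(0,1,0,1,0,1),(1,0,2,0,0,0),(1,2,1,0,0,1),(2,0,2,0,0,0),(2,2,1,1,0,0)],
[(0,1,0,1,0,1),(0,1,2,1,0,0),(1,0,2,0,0,1),(1,2,0,0,0,1),(2,0,1,0,0,0),(2,2,1,1,0,0)],
[(0,1,2,1,1,0),(0,1,2,1,1,0),(1,0,0,0,0,0),(1,0,0,0,1,0),(2,2,1,0,0,0),(2,2,1,1,0,0)],
[(0,1,0,1,1,1),(0,1,2,1,1,0),(1,0,0,0,0,0),(1,0,2,0,1,0),(2,2,1,0,0,1),(2,2,1,1,0,1)],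
[(0,1,2,1,1,0),(0,1,2,1,1,0),(1,0,0,0,0,1),(1,2,1,0,0,0),(2,0,0,0,1,1),(2,2,1,1,0,1)],
[(0,1,2,1,1,0),(0,2,1,1,0,0),(1,0,0,0,0,1),(1,0,0,0,1,1),(2,1,2,1,1,1),(2,2,1,0,0,0)],
[(0,1,2,1,1,0),(0,1,2,1,1,0),(1,0,1,0,0,0),(1,2,1,0,0,0),(2,0,0,0,1,0),(2,2,0,1,0,0)],
[(0,1,0,1,1,0),(0,2,0,1,0,1),(1,0,1,0,0,1),(1,2,1,0,0,1),(2,0,2,0,1,0),(2,1,2,1,1,0)],
[(0,1,2,1,1,0),(0,1,2,1,1,0),(1,0,0,0,0,1),(1,0,0,0,1,1),(2,2,1,0,0,0),(2,2,1,1,0,1)],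
[(0,1,2,1,1,0),(0,2,1,1,0,0),(1,0,0,0,0,1),(1,2,1,0,0,0),(2,0,0,0,1,1),(2,1,2,1,1,1)],
[(0,1,0,1,1,0),(0,1,2,1,1,0),(1,0,1,0,0,0),(1,0,2,0,1,0),(2,2,0,0,0,0),(2,2,1,1,0,0)],
[(0,1,0,1,1,0),(0,1,2,1,1,0),(1,0,0,0,0,1),(1,0,2,0,1,0),(2,2,1,0,0,1),(2,2,1,1,0,1)],
[(0,1,0,1,1,1),(0,1,2,1,1,0),(1,0,1,0,0,0),(1,0,2,0,1,0),(2,2,0,0,0,1),(2,2,1,1,0,1)],
[(0,1,0,1,1,1),(0,1,2,1,1,1),(1,0,1,0,0,0),(1,0,2,0,1,0),(2,2,0,0,0,1),(2,2,1,1,0,0)],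
[(0,1,0,1,1,0),(0,2,0,1,0,0),(1,0,1,0,0,0),(1,2,1,0,0,0),(2,0,2,0,1,0),(2,1,2,1,1,0)],
[(0,1,0,1,1,1),(0,2,1,1,0,1),(1,0,0,0,0,0),(1,2,1,0,0,1),(2,0,2,0,1,0),(2,1,2,1,1,0)],
[(0,1,0,1,1,1),(0,2,0,1,0,1),(1,0,1,0,0,0),(1,0,2,0,1,0),(2,1,2,1,1,0),(2,2,1,0,0,1)],
[(0,1,0,1,1,1),(0,1,2,1,1,0),(1,0,1,0,0,0),(1,2,1,0,0,0),(2,0,2,0,1,1),(2,2,0,1,0,1)],
[(0,1,0,1,1,0),(0,1,2,1,1,0),(1,0,0,0,0,0),(1,2,1,0,0,0),(2,0,2,0,1,0),(2,2,1,1,0,0)],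
[(0,1,0,1,1,0),(0,1,2,1,1,0),(1,0,0,0,0,1),(1,2,1,0,0,1),(2,0,2,0,1,0),(2,2,1,1,0,1)],
[(0,1,0,1,1,1),(0,1,2,1,1,0),(1,0,0,0,0,1),(1,2,1,0,0,1),(2,0,2,0,1,0),(2,2,1,1,0,0)],
[(0,1,0,1,1,1),(0,1,2,1,1,1),(1,0,0,0,0,1),(1,0,2,0,1,0),(2,2,1,0,0,0),(2,2,1,1,0,0)],
[(0,1,0,1,1,0),(0,2,1,1,0,0),(1,0,0,0,0,0),(1,0,2,0,1,0),(2,1,2,1,1,0),(2,2,1,0,0,0)],
[(0,1,0,1,1,1),(0,2,1,1,0,1),(1,0,0,0,0,0),(1,0,2,0,1,0),(2,1,2,1,1,0),(2,2,1,0,0,1)],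
[(0,1,0,1,1,1),(0,2,0,1,0,1),(1,0,1,0,0,0),(1,2,1,0,0,1),(2,0,2,0,1,0),(2,1,2,1,1,0)],
[(0,1,0,1,1,1),(0,1,2,1,1,0),(1,0,0,0,0,1),(1,0,2,0,1,1),(2,2,1,0,0,0),(2,2,1,1,0,0)],
[(0,1,1,1,0,0),(0,1,1,1,1,0),(1,0,2,0,1,0),(1,0,2,0,1,0),(2,2,0,0,0,0),(2,2,0,1,0,0)],
[(0,1,0,1,0,0),(0,1,1,1,1,1),(1,0,2,0,1,0),(1,0,2,0,1,0),(2,2,0,0,0,1),(2,2,1,1,0,1)],
[(0,1,1,1,0,0),(0,1,2,1,1,0),(1,0,1,0,1,1),(1,0,2,0,1,0),(2,2,0,0,0,1),(2,2,0,1,0,1)],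
[(0,1,1,1,0,0),(0,1,1,1,1,0),(1,0,2,0,1,1),(1,2,0,0,0,1),(2,0,2,0,1,0),(2,2,0,1,0,1)],
[(0,1,1,1,0,0),(0,1,2,1,1,0),(1,0,1,0,1,0),(1,2,0,0,0,0),(2,0,2,0,1,0),(2,2,0,1,0,0)],
[(0,1,0,1,0,0),(0,2,0,1,0,1),(1,0,1,0,1,1),(1,2,1,0,0,1),(2,0,2,0,1,0),(2,1,2,1,1,0)],
[(0,1,1,1,0,0),(0,1,2,1,1,0),(1,0,1,0,1,1),(1,2,0,0,0,1),(2,0,2,0,1,0),(2,2,0,1,0,1)],
[(0,1,1,1,0,0),(0,1,1,1,1,0),(1,0,2,0,1,0),(1,0,2,0,1,1),(2,2,0,0,0,1),(2,2,0,1,0,1)],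
[(0,1,0,1,0,0),(0,1,2,1,1,0),(1,0,1,0,1,0),(1,0,2,0,1,0),(2,2,0,0,0,0),(2,2,1,1,0,0)],
[(0,1,0,1,0,0),(0,1,2,1,1,0),(1,0,1,0,1,1),(1,0,2,0,1,0),(2,2,0,0,0,1),(2,2,1,1,0,1)],
[(0,1,0,1,0,1),(0,1,1,1,1,0),(1,0,2,0,1,0),(1,0,2,0,1,0),(2,2,0,0,0,1),(2,2,1,1,0,1)],
[(0,1,0,1,0,1),(0,1,2,1,1,1),(1,0,1,0,1,0),(1,0,2,0,1,0),(2,2,0,0,0,1),(2,2,1,1,0,0)],
[(0,1,0,1,0,0),(0,1,1,1,1,0),(1,0,2,0,1,0),(1,2,1,0,0,0),(2,0,2,0,1,0),(2,2,0,1,0,0)],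
[(0,1,0,1,0,1),(0,1,1,1,1,1),(1,0,2,0,1,0),(1,2,1,0,0,1),(2,0,2,0,1,0),(2,2,0,1,0,0)],
[(0,1,0,1,0,1),(0,1,1,1,1,1),(1,0,2,0,1,0),(1,0,2,0,1,0),(2,2,0,0,0,1),(2,2,1,1,0,0)],
[(0,1,0,1,0,1),(0,1,1,1,1,0),(1,0,2,0,1,0),(1,2,1,0,0,0),(2,0,2,0,1,1),(2,2,0,1,0,1)],
[(0,1,0,1,0,0),(0,1,2,1,1,0),(1,0,1,0,1,0),(1,2,0,0,0,0),(2,0,2,0,1,0),(2,2,1,1,0,0)],
[(0,1,0,1,0,0),(0,1,2,1,1,0),(1,0,1,0,1,1),(1,2,0,0,0,1),(2,0,2,0,1,0),(2,2,1,1,0,1)],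
[(0,1,0,1,0,1),(0,1,2,1,1,0),(1,0,1,0,1,1),(1,2,0,0,0,1),(2,0,2,0,1,0),(2,2,1,1,0,0)],
[(0,1,0,1,0,1),(0,1,2,1,1,1),(1,0,1,0,1,0),(1,2,0,0,0,1),(2,0,2,0,1,0),(2,2,1,1,0,0)],
[(0,1,0,1,0,0),(0,1,1,1,1,0),(1,0,2,0,1,0),(1,2,0,0,0,0),(2,0,2,0,1,0),(2,2,1,1,0,0)],
[(0,1,0,1,0,1),(0,1,1,1,1,1),(1,0,2,0,1,0),(1,0,2,0,1,0),(2,2,0,0,0,0),(2,2,1,1,0,1)],
[(0,1,0,1,0,1),(0,1,1,1,1,1),(1,0,2,0,1,0),(1,2,0,0,0,1),(2,0,2,0,1,0),(2,2,1,1,0,0)],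
[(0,1,0,1,0,1),(0,1,1,1,1,0),(1,0,2,0,1,1),(1,2,0,0,0,1),(2,0,2,0,1,0),(2,2,1,1,0,0)],
[(0,1,2,1,0,0),(0,2,1,1,1,0),(1,0,2,0,1,0),(1,2,0,0,0,0),(2,0,1,0,1,0),(2,1,0,1,0,0)],
[(0,1,0,1,0,0),(0,1,0,1,0,1),(1,0,2,0,1,0),(1,2,2,0,0,0),(2,0,1,0,1,1),(2,2,1,1,1,1)],
[(0,1,2,1,0,0),(0,2,1,1,1,0),(1,0,1,0,1,1),(1,0,2,0,1,0),(2,1,0,1,0,1),(2,2,0,0,0,1)],
[(0,1,2,1,0,0),(0,2,1,1,1,0),(1,0,2,0,1,1),(1,2,0,0,0,1),(2,0,1,0,1,0),(2,1,0,1,0,1)],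
[(0,1,2,1,0,0),(0,2,1,1,1,0),(1,0,1,0,1,0),(1,2,0,0,0,0),(2,0,2,0,1,0),(2,1,0,1,0,0)],
[(0,1,0,1,0,0),(0,1,0,1,0,1),(1,0,1,0,1,1),(1,0,1,0,1,1),(2,2,2,0,0,0),(2,2,2,1,1,0)],
[(0,1,2,1,0,0),(0,2,1,1,1,0),(1,0,1,0,1,1),(1,2,0,0,0,1),(2,0,2,0,1,0),(2,1,0,1,0,1)],
[(0,1,2,1,0,0),(0,2,1,1,1,0),(1,0,1,0,1,0),(1,0,2,0,1,1),(2,1,0,1,0,1),(2,2,0,0,0,1)],
[(0,1,0,1,0,0),(0,1,0,1,0,0),(1,0,2,0,1,0),(1,2,2,0,0,0),(2,0,1,0,1,0),(2,2,1,1,1,0)],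
[(0,1,0,1,0,0),(0,1,2,1,0,0),(1,0,1,0,1,1),(1,0,2,0,1,0),(2,2,0,0,0,1),(2,2,1,1,1,1)],
[(0,1,0,1,0,1),(0,1,2,1,0,0),(1,0,1,0,1,0),(1,0,2,0,1,0),(2,2,0,0,0,1),(2,2,1,1,1,1)],
[(0,1,0,1,0,1),(0,1,0,1,0,1),(1,0,1,0,1,0),(1,0,1,0,1,0),(2,2,2,0,0,0),(2,2,2,1,1,1)],
[(0,1,0,1,0,0),(0,1,0,1,0,0),(1,0,1,0,1,0),(1,0,1,0,1,0),(2,2,2,0,0,0),(2,2,2,1,1,0)],
[(0,1,0,1,0,1),(0,2,1,1,1,1),(1,0,1,0,1,1),(1,0,2,0,1,0),(2,1,0,1,0,0),(2,2,2,0,0,0)],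
[(0,1,0,1,0,1),(0,1,0,1,0,1),(1,0,1,0,1,0),(1,0,2,0,1,0),(2,2,1,0,1,1),(2,2,2,1,0,0)],
[(0,1,0,1,0,1),(0,1,2,1,0,0),(1,0,1,0,1,0),(1,0,1,0,1,0),(2,2,0,0,0,1),(2,2,2,1,1,1)],
[(0,1,0,1,0,0),(0,1,0,1,0,0),(1,0,1,0,1,0),(1,0,1,0,1,0),(2,2,2,0,0,0),(2,2,2,1,1,0)],
[(0,1,0,1,0,0),(0,1,2,1,0,0),(1,0,1,0,1,1),(1,0,1,0,1,1),(2,2,0,0,0,1),(2,2,2,1,1,0)],
[(0,1,0,1,0,1),(0,1,2,1,0,0),(1,0,1,0,1,1),(1,2,0,0,0,1),(2,0,1,0,1,0),(2,2,2,1,1,0)],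
[(0,1,0,1,0,1),(0,1,0,1,0,1),(1,0,1,0,1,0),(1,0,2,0,1,1),(2,2,1,0,1,0),(2,2,2,1,0,0)],
[(0,1,0,1,0,0),(0,1,0,1,0,0),(1,0,2,0,1,0),(1,2,2,0,0,0),(2,0,1,0,1,0),(2,2,1,1,1,0)],
[(0,1,0,1,0,1),(0,2,1,1,1,1),(1,0,2,0,1,0),(1,2,0,0,0,0),(2,0,1,0,1,1),(2,1,2,1,0,0)],
[(0,1,0,1,0,1),(0,1,0,1,0,1),(1,0,1,0,1,0),(1,0,1,0,1,1),(2,2,2,0,0,0),(2,2,2,1,1,0)],
[(0,1,0,1,0,1),(0,1,2,1,0,0),(1,0,2,0,1,1),(1,2,0,0,0,1),(2,0,1,0,1,0),(2,2,1,1,1,0)]]"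

definition cfgs :: "(nat \<times> nat \<times> nat \<times> nat) list" where
  "cfgs = concat (map (\<lambda>c0. concat (map (\<lambda>c1. concat (map (\<lambda>p. map (\<lambda>c2. (c0,c1,p,c2)) [0..<4]) [0..<6])) [0..<4])) [0..<4])"

definition okcfg :: "(nat \<times> nat \<times> nat \<times> nat) \<times> layer list \<Rightarrow> bool" where
  "okcfg x = (case x of ((c0,c1,p,c2),W) \<Rightarrow> countok c0 c1 c2 W \<and> list_all (layerok c0 c1 p c2) W)"

lemma allok: "list_all okcfg (zip cfgs witT)"
  by code_simp

lemma len_eq: "length cfgs = length witT"
  by code_simp

lemma cfg_in: "c0 < 4 \<Longrightarrow> c1 < 4 \<Longrightarrow> p < 6 \<Longrightarrow> c2 < 4 \<Longrightarrow> (c0,c1,p,c2) \<in> set cfgs"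
  unfolding cfgs_def by force

lemma wit_exists:
  assumes "c0 < 4" "c1 < 4" "p < 6" "c2 < 4"
  shows "\<exists>W. countok c0 c1 c2 W \<and> list_all (layerok c0 c1 p c2) W"
proof -
  obtain i where i: "i < length cfgs" "cfgs ! i = (c0,c1,p,c2)"
    using cfg_in[OF assms] by (metis in_set_conv_nth)
  have "okcfg (zip cfgs witT ! i)"
    using allok i(1) len_eq by (simp add: list_all_length)
  then show ?thesis using i len_eq unfolding okcfg_def by auto
qed

lemma lam_lt: "s < 3 \<Longrightarrow> b < 2 \<Longrightarrow> lam s b < 3"
  unfolding lam_def by auto
lemma lam_ne: "lam s b \<noteq> s"
  unfolding lam_def by auto
lemma lam_inj: "lam s b = lam s b' \<Longrightarrow> b = b'"
  unfolding lam_def by (auto split: if_splits)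

definition lami :: "nat \<Rightarrow> nat \<Rightarrow> nat" where
  "lami s z = (if z < s then z else z - 1)"

lemma lam_lami: "z \<noteq> s \<Longrightarrow> lam s (lami s z) = z"
  unfolding lam_def lami_def by auto
lemma lami_lt: "z < 3 \<Longrightarrow> s < 3 \<Longrightarrow> z \<noteq> s \<Longrightarrow> lami s z < 2"
  unfolding lami_def by auto

lemma cyc_edge:
  assumes "i < n" "n \<ge> 3"
  shows "cycle_edge n i (Suc i mod n)" "cycle_edge n (Suc i mod n) i" "Suc i mod n \<noteq> i" "Suc i mod n < n"
proof -
  show "cycle_edge n i (Suc i mod n)" "cycle_edge n (Suc i mod n) i"
    using assms unfolding cycle_edge_def by auto
  show "Suc i mod n < n" using assms by auto
  show "Suc i mod n \<noteq> i"
  proof (cases "Suc i < n")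
    case True then show ?thesis by simp
  next
    case False then have "Suc i = n" using assms by simp
    then show ?thesis using assms by simp
  qed
qed

lemma pair_func:
  assumes "corr_cover {0..<n} (cycle_edge n) L VH EH" "u < n" "v < n" "cycle_edge n u v"
    "a \<in> L u" "b \<in> L v" "b' \<in> L v" "EH a b" "EH a b'"
  shows "b = b'"
  using cc_match[OF assms(1) _ _ assms(4-)] assms(2,3) by auto

lemma pair_inj:
  assumes cov: "corr_cover {0..<n} (cycle_edge n) L VH EH" and "u < n" "v < n" "cycle_edge n v u"
    "a \<in> L u" "a' \<in> L u" "b \<in> L v" "EH a b" "EH a' b"
  shows "a = a'"
proof -
  have sg: "simple_graph VH EH" using cc_simple[OF cov] .
  have "EH b a" "EH b a'" using assms(8,9) sg_sym[OF sg] by auto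
  then show ?thesis using cc_match[OF cov _ _ assms(4)] assms(2,3,5-7) by auto
qed

lemma card2_other:
  assumes "finite A" "card A = 2" "x \<in> A"
  shows "\<exists>!y. y \<in> A \<and> y \<noteq> x"
proof -
  obtain a b where ab: "A = {a, b}" "a \<noteq> b" using assms(2) by (auto simp: card_2_iff)
  then show ?thesis using assms(3) by auto
qed

locale seg =
  fixes n :: nat and L :: "nat \<Rightarrow> 'b set" and VH :: "'b set" and EH :: "'b \<Rightarrow> 'b \<Rightarrow> bool"
    and l r :: nat and e :: "nat \<Rightarrow> 'b"
  assumes cov: "corr_cover {0..<n} (cycle_edge n) L VH EH"
    and n3: "n \<ge> 3" and lr: "l < r" and rn: "r \<le> n" and Rl: "r mod n \<noteq> l"
    and fin: "\<forall>v<n. finite (L v)"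
    and cl: "card (L l) = 3" and cR: "card (L (r mod n)) = 3"
    and cI: "\<forall>i. l < i \<longrightarrow> i < r \<longrightarrow> card (L i) = 2"
    and ebij: "bij_betw e {0..<3} (L l)"
begin

definition R where "R = r mod n"
definition direct where "direct = (r = Suc l)"

lemma ln: "l < n" using lr rn by simp
lemma Rn: "R < n" unfolding R_def using n3 by simp
lemma finl: "finite (L l)" using fin ln by simp
lemma finR: "finite (L R)" using fin Rn by simp

lemma step_edge:
  assumes "l \<le> i" "i < r"
  shows "i < n" "Suc i mod n = (if Suc i = r then R else Suc i)"
    "cycle_edge n i (Suc i mod n)" "cycle_edge n (Suc i mod n) i" "Suc i mod n < n"
proof -
  show "i < n" using assms rn by simp
  then show "cycle_edge n i (Suc i mod n)" "cycle_edge n (Suc i mod n) i" "Suc i mod n < n"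
    using cyc_edge n3 by auto
  show "Suc i mod n = (if Suc i = r then R else Suc i)"
    using assms rn unfolding R_def by auto
qed

definition piD where
  "piD = (SOME \<pi>. bij_betw \<pi> (L l) (L R) \<and> (\<forall>x\<in>L l. \<forall>y\<in>L R. EH x y \<longrightarrow> \<pi> x = y))"

lemma piD: assumes direct
  shows "bij_betw piD (L l) (L R)" "\<And>x y. x \<in> L l \<Longrightarrow> y \<in> L R \<Longrightarrow> EH x y \<Longrightarrow> piD x = y"
proof -
  have RS: "R = Suc l mod n" using assms unfolding direct_def R_def by simp
  have e1: "cycle_edge n l R" "cycle_edge n R l" using step_edge[of l] lr RS by auto
  have "\<exists>h. inj_on h (L l) \<and> h ` L l \<subseteq> L R \<and> (\<forall>a\<in>L l. \<forall>b\<in>L R. EH a b \<longrightarrow> h a = b)"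
    apply (rule extend_inj[OF finl finR])
    subgoal using cl cR unfolding R_def by simp
    subgoal using pair_func[OF cov ln Rn e1(1)] by blast
    subgoal using pair_inj[OF cov ln Rn e1(2)] by blast
    done
  then have "\<exists>\<pi>. bij_betw \<pi> (L l) (L R) \<and> (\<forall>x\<in>L l. \<forall>y\<in>L R. EH x y \<longrightarrow> \<pi> x = y)"
    using inj_card_bij finR cl cR unfolding R_def by metis
  from someI_ex[OF this] show "bij_betw piD (L l) (L R)" "\<And>x y. x \<in> L l \<Longrightarrow> y \<in> L R \<Longrightarrow> EH x y \<Longrightarrow> piD x = y"
    unfolding piD_def by auto
qed

definition f where
  "f = (SOME f. inj_on f (L (Suc l)) \<and> f ` L (Suc l) \<subseteq> L l \<and> (\<forall>c\<in>L (Suc l). \<forall>x\<in>L l. EH c x \<longrightarrow> f c = x))"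

lemma fprop: assumes "\<not> direct"
  shows "inj_on f (L (Suc l))" "f ` L (Suc l) \<subseteq> L l" "\<And>c x. c \<in> L (Suc l) \<Longrightarrow> x \<in> L l \<Longrightarrow> EH c x \<Longrightarrow> f c = x"
proof -
  have sl: "Suc l < r" using assms lr unfolding direct_def by simp
  have sn: "Suc l < n" using sl rn by simp
  have ed: "cycle_edge n l (Suc l)" "cycle_edge n (Suc l) l" using step_edge[of l] lr sl by auto
  have c2: "card (L (Suc l)) = 2" using cI sl by simp
  have "\<exists>h. inj_on h (L (Suc l)) \<and> h ` L (Suc l) \<subseteq> L l \<and> (\<forall>a\<in>L (Suc l). \<forall>b\<in>L l. EH a b \<longrightarrow> h a = b)"
    apply (rule extend_inj)
    subgoal using fin sn by simp
    subgoal by (rule finl)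
    subgoal using cl c2 by simp
    subgoal using pair_func[OF cov sn ln ed(2)] by blast
    subgoal using pair_inj[OF cov sn ln ed(1)] by blast
    done
  from someI_ex[OF this] show "inj_on f (L (Suc l))" "f ` L (Suc l) \<subseteq> L l"
    "\<And>c x. c \<in> L (Suc l) \<Longrightarrow> x \<in> L l \<Longrightarrow> EH c x \<Longrightarrow> f c = x"
    unfolding f_def by auto
qed

definition tau where
  "tau i = (SOME t. bij_betw t (L i) (L (Suc i)) \<and> (\<forall>c\<in>L i. \<not> EH c (t c)))"

lemma tauprop: assumes "l < i" "Suc i < r"
  shows "bij_betw (tau i) (L i) (L (Suc i))" "\<And>c. c \<in> L i \<Longrightarrow> \<not> EH c (tau i c)"
proof -
  have sn: "Suc i < n" "i < n" using assms rn by auto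
  have ed: "cycle_edge n i (Suc i)" "cycle_edge n (Suc i) i" using step_edge[of i] assms by auto
  have c2: "card (L i) = 2" "card (L (Suc i)) = 2" using cI assms by auto
  have fi: "finite (L i)" "finite (L (Suc i))" using fin sn by auto
  have "\<exists>h. inj_on h (L i) \<and> h ` L i \<subseteq> L (Suc i) \<and> (\<forall>a\<in>L i. \<forall>b\<in>L (Suc i). EH a b \<longrightarrow> h a = b)"
    apply (rule extend_inj[OF fi])
    subgoal using c2 by simp
    subgoal using pair_func[OF cov sn(2) sn(1) ed(1)] by blast
    subgoal using pair_inj[OF cov sn(2) sn(1) ed(2)] by blast
    done
  then obtain \<mu> where mu: "inj_on \<mu> (L i)" "\<mu> ` L i \<subseteq> L (Suc i)" "\<forall>a\<in>L i. \<forall>b\<in>L (Suc i). EH a b \<longrightarrow> \<mu> a = b"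
    by blast
  obtain d0 d1 where d: "L (Suc i) = {d0, d1}" "d0 \<noteq> d1" using c2(2) by (auto simp: card_2_iff)
  define t where "t c = (if \<mu> c = d0 then d1 else d0)" for c
  have tin: "t c \<in> L (Suc i)" for c unfolding t_def using d by auto
  have tne: "c \<in> L i \<Longrightarrow> t c \<noteq> \<mu> c" for c unfolding t_def using d mu(2) by auto
  have "inj_on t (L i)"
  proof (rule inj_onI)
    fix a b assume ab: "a \<in> L i" "b \<in> L i" "t a = t b"
    have "\<mu> a \<in> {d0, d1}" "\<mu> b \<in> {d0,d1}" using ab mu(2) d by auto
    then have "\<mu> a = \<mu> b" using ab(3) d(2) unfolding t_def by (auto split: if_splits)
    then show "a = b" using mu(1) ab by (auto dest: inj_onD)
  qed
  then have tb: "bij_betw t (L i) (L (Suc i))"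
    using inj_card_bij[of t "L i" "L (Suc i)"] tin fi c2 by auto
  have tn: "\<forall>c\<in>L i. \<not> EH c (t c)"
  proof (intro ballI notI)
    fix c assume c: "c \<in> L i" "EH c (t c)"
    then have "\<mu> c = t c" using mu(3) tin by blast
    then show False using tne[OF c(1)] by simp
  qed
  have "\<exists>t. bij_betw t (L i) (L (Suc i)) \<and> (\<forall>c\<in>L i. \<not> EH c (t c))" using tb tn by blast
  from someI_ex[OF this] show "bij_betw (tau i) (L i) (L (Suc i))" "\<And>c. c \<in> L i \<Longrightarrow> \<not> EH c (tau i c)"
    unfolding tau_def by auto
qed

primrec hk :: "nat \<Rightarrow> 'b \<Rightarrow> 'b" where
  "hk 0 = id"
| "hk (Suc k) = tau (Suc l + k) \<circ> hk k"

definition h where "h i = hk (i - Suc l)"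

lemma hk_bij: "Suc l + k < r \<Longrightarrow> bij_betw (hk k) (L (Suc l)) (L (Suc l + k))"
proof (induction k)
  case 0 then show ?case by (simp add: bij_betw_def)
next
  case (Suc k)
  have "bij_betw (tau (Suc l + k)) (L (Suc l + k)) (L (Suc (Suc l + k)))"
    using tauprop[of "Suc l + k"] Suc.prems by simp
  moreover have "bij_betw (hk k) (L (Suc l)) (L (Suc l + k))" using Suc by simp
  ultimately have "bij_betw (tau (Suc l + k) \<circ> hk k) (L (Suc l)) (L (Suc (Suc l + k)))"
    by (rule bij_betw_trans[rotated])
  then show ?case by (metis hk.simps(2) add_Suc_right)
qed

lemma h_bij: "Suc l \<le> i \<Longrightarrow> i < r \<Longrightarrow> bij_betw (h i) (L (Suc l)) (L i)"
  unfolding h_def using hk_bij[of "i - Suc l"] by simp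

lemma h_first: "h (Suc l) = id" unfolding h_def by simp

lemma h_step: assumes "Suc l \<le> i" shows "h (Suc i) = tau i \<circ> h i"
proof -
  have a: "Suc i - Suc l = Suc (i - Suc l)" "Suc (l + (i - Suc l)) = i" using assms by arith+
  show ?thesis unfolding h_def a(1) by (simp only: hk.simps add_Suc a(2))
qed

definition g where
  "g = (SOME g. inj_on g (L (r - 1)) \<and> g ` L (r - 1) \<subseteq> L R \<and> (\<forall>c\<in>L (r - 1). \<forall>y\<in>L R. EH c y \<longrightarrow> g c = y))"

lemma gprop: assumes "\<not> direct"
  shows "inj_on g (L (r - 1))" "g ` L (r - 1) \<subseteq> L R" "\<And>c y. c \<in> L (r - 1) \<Longrightarrow> y \<in> L R \<Longrightarrow> EH c y \<Longrightarrow> g c = y"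
proof -
  have sl: "Suc l < r" using assms lr unfolding direct_def by simp
  have i1: "l \<le> r - 1" "r - 1 < r" "Suc (r - 1) = r" using sl by auto
  have sn: "r - 1 < n" using sl rn by simp
  have ed: "cycle_edge n (r - 1) R" "cycle_edge n R (r - 1)" using step_edge[OF i1(1,2)] i1(3) by auto
  have c2: "card (L (r - 1)) = 2" using cI sl by simp
  have "\<exists>h. inj_on h (L (r - 1)) \<and> h ` L (r - 1) \<subseteq> L R \<and> (\<forall>a\<in>L (r - 1). \<forall>b\<in>L R. EH a b \<longrightarrow> h a = b)"
    apply (rule extend_inj)
    subgoal using fin sn by simp
    subgoal by (rule finR)
    subgoal using cR c2 unfolding R_def by simp
    subgoal using pair_func[OF cov sn Rn ed(1)] by blast
    subgoal using pair_inj[OF cov sn Rn ed(2)] by blast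
    done
  from someI_ex[OF this] show "inj_on g (L (r - 1))" "g ` L (r - 1) \<subseteq> L R"
    "\<And>c y. c \<in> L (r - 1) \<Longrightarrow> y \<in> L R \<Longrightarrow> EH c y \<Longrightarrow> g c = y"
    unfolding g_def by auto
qed

definition G where "G c = g (h (r - 1) c)"

lemma Gprop: assumes "\<not> direct"
  shows "inj_on G (L (Suc l))" "G ` L (Suc l) \<subseteq> L R"
proof -
  have sl: "Suc l < r" using assms lr unfolding direct_def by simp
  have hb: "bij_betw (h (r - 1)) (L (Suc l)) (L (r - 1))" using h_bij[of "r - 1"] sl by simp
  show "inj_on G (L (Suc l))" unfolding G_def
  proof (rule inj_onI)
    fix x y assume xy: "x \<in> L (Suc l)" "y \<in> L (Suc l)" "g (h (r - 1) x) = g (h (r - 1) y)"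
    have "h (r - 1) x \<in> L (r - 1)" "h (r - 1) y \<in> L (r - 1)" using hb xy by (auto simp: bij_betw_def)
    then have "h (r - 1) x = h (r - 1) y" using gprop(1)[OF assms] xy(3) by (auto dest: inj_onD)
    then show "x = y" using hb xy by (auto simp: bij_betw_def dest: inj_onD)
  qed
  show "G ` L (Suc l) \<subseteq> L R" unfolding G_def
    using hb gprop(2)[OF assms] by (auto simp: bij_betw_def)
qed

lemma card_diff1:
  assumes "finite A" "card A = 3" "inj_on k B" "finite B" "card B = 2" "k ` B \<subseteq> A"
  shows "\<exists>!x. x \<in> A \<and> x \<notin> k ` B"
proof -
  have c: "card (k ` B) = 2" using assms by (simp add: card_image)
  have "card (A - k ` B) = card A - card (k ` B)"
    using assms(4,6) by (intro card_Diff_subset) auto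
  then have "card (A - k ` B) = 1" using assms(2) c by simp
  then obtain x where x: "A - k ` B = {x}" by (rule card_1_singletonE)
  show ?thesis
  proof (rule ex1I[of _ x])
    show "x \<in> A \<and> x \<notin> k ` B" using x by blast
    show "\<And>y. y \<in> A \<and> y \<notin> k ` B \<Longrightarrow> y = x" using x by blast
  qed
qed

lemma finS: assumes "\<not> direct" shows "finite (L (Suc l)) \<and> card (L (Suc l)) = 2"
proof -
  have a: "Suc l < r" using assms lr unfolding direct_def by simp
  then have "Suc l < n" using rn by simp
  then show ?thesis using fin cI a by simp
qed

definition xs where "xs = (THE x. x \<in> L l \<and> x \<notin> f ` L (Suc l))"
definition ys where "ys = (THE y. y \<in> L R \<and> y \<notin> G ` L (Suc l))"

lemma xs: assumes "\<not> direct" shows "xs \<in> L l" "xs \<notin> f ` L (Suc l)"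
  "\<And>x. x \<in> L l \<Longrightarrow> x \<notin> f ` L (Suc l) \<Longrightarrow> x = xs"
proof -
  have "\<exists>!x. x \<in> L l \<and> x \<notin> f ` L (Suc l)"
    using card_diff1[OF finl cl fprop(1)[OF assms]] finS[OF assms] fprop(2)[OF assms] by auto
  note th = theI'[OF this, folded xs_def]
  show "xs \<in> L l" "xs \<notin> f ` L (Suc l)" using th by auto
  show "\<And>x. x \<in> L l \<Longrightarrow> x \<notin> f ` L (Suc l) \<Longrightarrow> x = xs"
    using th \<open>\<exists>!x. x \<in> L l \<and> x \<notin> f ` L (Suc l)\<close> by blast
qed

lemma ys: assumes "\<not> direct" shows "ys \<in> L R" "ys \<notin> G ` L (Suc l)"
proof -
  have "\<exists>!x. x \<in> L R \<and> x \<notin> G ` L (Suc l)"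
    using card_diff1[OF finR _ Gprop(1)[OF assms]] cR finS[OF assms] Gprop(2)[OF assms]
    unfolding R_def by auto
  note th = theI'[OF this, folded ys_def]
  show "ys \<in> L R" "ys \<notin> G ` L (Suc l)" using th by auto
qed

definition s where "s = (THE z. z < 3 \<and> e z = xs)"

lemma e_inj': "x < 3 \<Longrightarrow> y < 3 \<Longrightarrow> e x = e y \<Longrightarrow> x = y"
  using ebij unfolding bij_betw_def inj_on_def by auto

lemma s: assumes "\<not> direct" shows "s < 3" "e s = xs"
proof -
  have "xs \<in> e ` {0..<3}" using xs(1)[OF assms] bij_betw_imp_surj_on[OF ebij] by simp
  then obtain z where z: "z < 3" "e z = xs" by auto
  have "\<exists>!z. z < 3 \<and> e z = xs"
  proof (rule ex1I[of _ z])
    show "z < 3 \<and> e z = xs" using z by simp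
    show "\<And>w. w < 3 \<and> e w = xs \<Longrightarrow> w = z"
    proof -
      fix w assume "w < 3 \<and> e w = xs"
      then show "w = z" using e_inj'[of w z] z by simp
    qed
  qed
  note th = theI'[OF this, folded s_def]
  show "s < 3" "e s = xs" using th by auto
qed

lemma e_inj: "x < 3 \<Longrightarrow> y < 3 \<Longrightarrow> e x = e y \<Longrightarrow> x = y"
  using ebij unfolding bij_betw_def inj_on_def by auto
lemma e_in: "x < 3 \<Longrightarrow> e x \<in> L l"
  using ebij unfolding bij_betw_def by auto

definition e1 where "e1 b = (THE c. c \<in> L (Suc l) \<and> f c = e (lam s b))"

lemma e1: assumes "\<not> direct" "b < 2" shows "e1 b \<in> L (Suc l)" "f (e1 b) = e (lam s b)"
proof -
  have s3: "s < 3" using s(1)[OF assms(1)] .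
  have z: "lam s b < 3" using lam_lt[OF s3 assms(2)] .
  have zs: "lam s b \<noteq> s" by (rule lam_ne)
  have "e (lam s b) \<noteq> e s"
  proof
    assume "e (lam s b) = e s"
    then have "lam s b = s" using e_inj[OF z s3] by simp
    then show False using zs by simp
  qed
  then have ne: "e (lam s b) \<noteq> xs" using s(2)[OF assms(1)] by simp
  have "e (lam s b) \<in> L l" using e_in[OF z] .
  then have "e (lam s b) \<in> f ` L (Suc l)" using xs(3)[OF assms(1)] ne by blast
  then obtain c where c0: "e (lam s b) = f c" "c \<in> L (Suc l)" by (rule imageE)
  then have c: "c \<in> L (Suc l)" "f c = e (lam s b)" by simp_all
  have "\<exists>!c. c \<in> L (Suc l) \<and> f c = e (lam s b)"
  proof (rule ex1I[of _ c])
    show "c \<in> L (Suc l) \<and> f c = e (lam s b)" using c by simp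
    show "\<And>d. d \<in> L (Suc l) \<and> f d = e (lam s b) \<Longrightarrow> d = c"
    proof -
      fix d assume d: "d \<in> L (Suc l) \<and> f d = e (lam s b)"
      then have "f d = f c" using c by simp
      then show "d = c" using inj_onD[OF fprop(1)[OF assms(1)]] d c(1) by blast
    qed
  qed
  note th = theI'[OF this, folded e1_def]
  show "e1 b \<in> L (Suc l)" "f (e1 b) = e (lam s b)" using th by auto
qed

lemma e1_inj: assumes "\<not> direct" "b < 2" "b' < 2" "e1 b = e1 b'" shows "b = b'"
proof -
  have "e (lam s b) = e (lam s b')" using e1(2)[OF assms(1,2)] e1(2)[OF assms(1,3)] assms(4) by simp
  moreover have "lam s b < 3" "lam s b' < 3" using lam_lt[OF s(1)[OF assms(1)]] assms(2,3) by auto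
  ultimately have "lam s b = lam s b'" using e_inj by blast
  then show ?thesis by (rule lam_inj)
qed

lemma e1_bij: assumes "\<not> direct" shows "bij_betw e1 {0..<2} (L (Suc l))"
  apply (rule inj_card_bij)
  subgoal using e1_inj[OF assms] by (auto intro: inj_onI)
  subgoal using e1(1)[OF assms] by auto
  subgoal using finS[OF assms] by simp
  subgoal using finS[OF assms] by simp
  done

definition eR where
  "eR z = (if direct then piD (e z) else if z = s then ys else G (e1 (1 - lami s z)))"

definition code where "code = (if direct then 0 else Suc s)"

lemma code_lt: "code < 4" unfolding code_def using s(1) by auto

lemma eR_bij: "bij_betw eR {0..<3} (L R)"
proof (cases direct)
  case True
  have "bij_betw (piD \<circ> e) {0..<3} (L R)" using bij_betw_trans[OF ebij piD(1)[OF True]] .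
  moreover have "eR = piD \<circ> e" using True unfolding eR_def by (auto simp: fun_eq_iff)
  ultimately show ?thesis by simp
next
  case False
  have vals: "eR z \<in> L R" if "z < 3" for z
  proof (cases "z = s")
    case True then show ?thesis using ys(1)[OF False] False unfolding eR_def by simp
  next
    case ne: False
    have "1 - lami s z < 2" by simp
    then have "e1 (1 - lami s z) \<in> L (Suc l)" using e1(1)[OF False] by blast
    then show ?thesis using Gprop(2)[OF False] ne False unfolding eR_def by auto
  qed
  have inj: "inj_on eR {0..<3}"
  proof (rule inj_onI)
    fix z z' assume zz: "z \<in> {0..<3}" "z' \<in> {0..<3}" "eR z = eR z'"
    have G_in: "G (e1 (1 - lami s w)) \<in> G ` L (Suc l)" for w
      using e1(1)[OF False] by simp
    show "z = z'"
    proof (cases "z = s"; cases "z' = s")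
      assume "z = s" "z' = s" then show ?thesis by simp
    next
      assume a: "z = s" "z' \<noteq> s"
      then have "ys = G (e1 (1 - lami s z'))" using zz False unfolding eR_def by simp
      then show ?thesis using ys(2)[OF False] G_in by metis
    next
      assume a: "z \<noteq> s" "z' = s"
      then have "ys = G (e1 (1 - lami s z))" using zz False unfolding eR_def by simp
      then show ?thesis using ys(2)[OF False] G_in by metis
    next
      assume a: "z \<noteq> s" "z' \<noteq> s"
      then have "G (e1 (1 - lami s z)) = G (e1 (1 - lami s z'))" using zz False unfolding eR_def by simp
      then have "e1 (1 - lami s z) = e1 (1 - lami s z')"
        using Gprop(1)[OF False] e1(1)[OF False] by (auto dest: inj_onD)
      then have "1 - lami s z = 1 - lami s z'" using e1_inj[OF False] by simp
      moreover have "lami s z < 2" "lami s z' < 2" using lami_lt zz a s(1)[OF False] by auto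
      ultimately have "lami s z = lami s z'" by simp
      then show ?thesis using lam_lami a by metis
    qed
  qed
  show ?thesis
    apply (rule inj_card_bij[OF inj])
    subgoal using vals by auto
    subgoal by (rule finR)
    subgoal using cR unfolding R_def by simp
    done
qed

definition col where "col x y b i = (if i = l then e x else if i = r then eR y else h i (e1 b))"

lemma inner_bij: assumes "l < i" "i < r" shows "bij_betw (\<lambda>b. h i (e1 b)) {0..<2} (L i)"
proof -
  have nd: "\<not> direct" using assms unfolding direct_def by auto
  have "bij_betw (h i \<circ> e1) {0..<2} (L i)"
    using bij_betw_trans[OF e1_bij[OF nd] h_bij[of i]] assms by simp
  then show ?thesis by (simp add: comp_def)
qed

lemma seg_ok:
  assumes xyb: "x < 3" "y < 3" "b < 2" and ok: "segok code id x y b" and i: "l \<le> i" "i < r"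
  shows "\<not> EH (col x y b i) (col x y b (Suc i))"
proof (cases direct)
  case True
  then have il: "i = l" "Suc i = r" using i unfolding direct_def by auto
  have yx: "y \<noteq> x" using ok True unfolding segok_def code_def by simp
  show ?thesis
  proof
    assume "EH (col x y b i) (col x y b (Suc i))"
    then have E: "EH (e x) (piD (e y))" using il True lr unfolding col_def eR_def by auto
    have "piD (e y) \<in> L R" using piD(1)[OF True] e_in[OF xyb(2)] by (auto simp: bij_betw_def)
    then have "piD (e x) = piD (e y)" using piD(2)[OF True e_in[OF xyb(1)] _ E] by simp
    then have "e x = e y" using piD(1)[OF True] e_in xyb by (auto simp: bij_betw_def dest: inj_onD)
    then show False using e_inj xyb yx by blast
  qed
next
  case False
  have sl: "Suc l < r" using False lr unfolding direct_def by simp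
  have okc: "lam s b \<noteq> x" "lam s (1 - b) \<noteq> y" using ok False unfolding segok_def code_def by auto
  have s3: "s < 3" using s(1)[OF False] .
  have e1b: "e1 b \<in> L (Suc l)" using e1(1)[OF False xyb(3)] .
  show ?thesis
  proof (cases "i = l")
    case True
    have c1: "col x y b i = e x" "col x y b (Suc i) = e1 b"
      using True sl h_first unfolding col_def by auto
    show ?thesis
    proof
      assume "EH (col x y b i) (col x y b (Suc i))"
      then have "EH (e x) (e1 b)" using c1 by simp
      then have "EH (e1 b) (e x)" using sg_sym[OF cc_simple[OF cov]] by blast
      then have "f (e1 b) = e x" using fprop(3)[OF False e1b e_in[OF xyb(1)]] by simp
      then have "e (lam s b) = e x" using e1(2)[OF False xyb(3)] by simp
      then have "lam s b = x" using e_inj lam_lt[OF s3 xyb(3)] xyb(1) by blast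
      then show False using okc by simp
    qed
  next
    case il: False
    then have li: "l < i" using i by simp
    have hi: "h i (e1 b) \<in> L i" using h_bij[of i] li i e1b by (auto simp: bij_betw_def)
    have ci: "col x y b i = h i (e1 b)" using li i unfolding col_def by auto
    show ?thesis
    proof (cases "Suc i = r")
      case False
      have "col x y b (Suc i) = tau i (h i (e1 b))"
        using li False h_step[of i] unfolding col_def by auto
      then show ?thesis using ci tauprop(2)[OF li] False i hi by simp
    next
      case True
      have cr: "col x y b (Suc i) = eR y" using True lr unfolding col_def by auto
      have ir: "i = r - 1" using True by simp
      have eRy: "eR y \<in> L R" using eR_bij xyb(2) by (auto simp: bij_betw_def)
      show ?thesis
      proof
        assume "EH (col x y b i) (col x y b (Suc i))"
        then have "EH (h (r - 1) (e1 b)) (eR y)" using ci cr ir by simp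
        moreover have "h (r - 1) (e1 b) \<in> L (r - 1)" using hi ir by simp
        ultimately have Gb: "G (e1 b) = eR y" using gprop(3)[OF False] eRy unfolding G_def by blast
        show False
        proof (cases "y = s")
          case True
          then have "eR y = ys" using False unfolding eR_def by simp
          then show False using ys(2)[OF False] Gb e1b by (metis image_eqI)
        next
          case ys: False
          have lt: "1 - lami s y < 2" by simp
          have "eR y = G (e1 (1 - lami s y))" using ys False unfolding eR_def by simp
          then have "G (e1 b) = G (e1 (1 - lami s y))" using Gb by simp
          then have "e1 b = e1 (1 - lami s y)"
            using Gprop(1)[OF False] e1b e1(1)[OF False lt] by (auto dest: inj_onD)
          then have "b = 1 - lami s y" using e1_inj[OF False xyb(3) lt] by simp
          moreover have "lami s y < 2" using lami_lt[OF xyb(2) s3 ys] .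
          ultimately have "lami s y = 1 - b" using xyb(3) by simp
          then have "lam s (1 - b) = y" using lam_lami[OF ys] by simp
          then show False using okc by simp
        qed
      qed
    qed
  qed
qed

end

lemma lt3: "(z::nat) < 3 \<longleftrightarrow> z = 0 \<or> z = 1 \<or> z = 2" by presburger
lemma lt6: "(z::nat) < 6 \<longleftrightarrow> z = 0 \<or> z = 1 \<or> z = 2 \<or> z = 3 \<or> z = 4 \<or> z = 5" by presburger
lemma all3: "(\<forall>z<(3::nat). R z) \<longleftrightarrow> R 0 \<and> R 1 \<and> R 2"
  unfolding lt3 by auto
lemma ex6: "(\<exists>p<(6::nat). R p) \<longleftrightarrow> R 0 \<or> R 1 \<or> R 2 \<or> R 3 \<or> R 4 \<or> R 5"
  unfolding lt6 by auto

lemma perm3: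
  assumes "\<forall>z<3. P z < (3::nat)" "inj_on P {0..<3}"
  shows "\<exists>p<6. \<forall>z<3. perms ! p ! z = P z"
proof -
  have a: "P 0 < 3" "P 1 < 3" "P 2 < 3" using assms(1) by auto
  have d: "P 0 \<noteq> P 1" "P 0 \<noteq> P 2" "P 1 \<noteq> P 2"
    using inj_onD[OF assms(2), of 0 1] inj_onD[OF assms(2), of 0 2] inj_onD[OF assms(2), of 1 2] by auto
  have z3: "\<And>z::nat. z < 3 \<longleftrightarrow> z = 0 \<or> z = 1 \<or> z = 2" by auto
  have "P 0 = 0 \<or> P 0 = 1 \<or> P 0 = 2" "P 1 = 0 \<or> P 1 = 1 \<or> P 1 = 2" "P 2 = 0 \<or> P 2 = 1 \<or> P 2 = 2"
    using a by auto
  then show ?thesis using d unfolding perms_def ex6 all3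
    by (elim disjE) simp_all
qed

locale core =
  fixes n :: nat and L :: "nat \<Rightarrow> 'b set" and VH :: "'b set" and EH :: "'b \<Rightarrow> 'b \<Rightarrow> bool"
  assumes n3: "n \<ge> 3" and cov: "corr_cover {0..<n} (cycle_edge n) L VH EH"
    and sizes: "\<forall>v<n. finite (L v) \<and> (card (L v) = 2 \<or> card (L v) = 3)"
    and c0: "card (L 0) = 3"
    and cB: "card {v\<in>{0..<n}. card (L v) = 3} = 3"
begin

definition Bs where "Bs = {v\<in>{0..<n}. card (L v) = 3}"
definition b1 where "b1 = Min (Bs - {0})"
definition b2 where "b2 = Max (Bs - {0})"

lemma Bfacts: "0 < b1" "b1 < b2" "b2 < n" "card (L b1) = 3" "card (L b2) = 3"
  "\<And>v. v < n \<Longrightarrow> v \<noteq> 0 \<Longrightarrow> v \<noteq> b1 \<Longrightarrow> v \<noteq> b2 \<Longrightarrow> card (L v) = 2"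
proof -
  have fin: "finite Bs" unfolding Bs_def by simp
  have z: "0 \<in> Bs" unfolding Bs_def using c0 n3 by simp
  have "card Bs = 3" using cB unfolding Bs_def .
  then have "card (Bs - {0}) = 2" using z fin by (simp add: card_Diff_singleton)
  then obtain a c where ac: "Bs - {0} = {a, c}" "a \<noteq> c" by (auto simp: card_2_iff)
  have m: "b1 = min a c" "b2 = max a c" unfolding b1_def b2_def ac(1) by auto
  have inB: "b1 \<in> Bs - {0}" "b2 \<in> Bs - {0}" unfolding m ac(1) by (auto simp: min_def max_def)
  show "0 < b1" "b2 < n" "card (L b1) = 3" "card (L b2) = 3" using inB unfolding Bs_def by auto
  show "b1 < b2" using ac(2) unfolding m by auto
  show "\<And>v. v < n \<Longrightarrow> v \<noteq> 0 \<Longrightarrow> v \<noteq> b1 \<Longrightarrow> v \<noteq> b2 \<Longrightarrow> card (L v) = 2"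
  proof -
    fix v assume v: "v < n" "v \<noteq> 0" "v \<noteq> b1" "v \<noteq> b2"
    have "v \<notin> Bs - {0}" using v ac(1) m by (auto simp: min_def max_def split: if_splits)
    then have "card (L v) \<noteq> 3" using v unfolding Bs_def by auto
    then show "card (L v) = 2" using sizes v by auto
  qed
qed

definition e0 :: "nat \<Rightarrow> 'b" where "e0 = (SOME e. bij_betw e {0..<3::nat} (L 0))"

lemma e0: "bij_betw e0 {0..<3} (L 0)"
proof -
  have "finite (L 0)" using sizes n3 by auto
  then have "\<exists>e. bij_betw e {0..<3::nat} (L 0)" using ex_bij_betw_nat_finite[of "L 0"] c0 by simp
  then show ?thesis unfolding e0_def by (rule someI_ex)
qed

lemma finL: "\<forall>v<n. finite (L v)" using sizes by auto

lemma S0: "seg n L VH EH 0 b1 e0"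
  by (rule seg.intro) (use n3 cov Bfacts finL c0 e0 in auto)

interpretation S0: seg n L VH EH 0 b1 e0 by (rule S0)

definition eb1 where "eb1 = S0.eR"

lemma eb1: "bij_betw eb1 {0..<3} (L b1)"
  using S0.eR_bij Bfacts unfolding eb1_def S0.R_def by simp

lemma S1: "seg n L VH EH b1 b2 eb1"
  by (rule seg.intro) (use n3 cov Bfacts finL eb1 in auto)

interpretation S1: seg n L VH EH b1 b2 eb1 by (rule S1)

definition eb2 where "eb2 = S1.eR"

lemma eb2: "bij_betw eb2 {0..<3} (L b2)"
  using S1.eR_bij Bfacts unfolding eb2_def S1.R_def by simp

lemma S2: "seg n L VH EH b2 n eb2"
  by (rule seg.intro) (use n3 cov Bfacts finL eb2 c0 in auto)

interpretation S2: seg n L VH EH b2 n eb2 by (rule S2)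

definition eR2 where "eR2 = S2.eR"

lemma eR2: "bij_betw eR2 {0..<3} (L 0)"
  using S2.eR_bij unfolding eR2_def S2.R_def by simp

definition P2 where "P2 z = (THE w. w < 3 \<and> e0 w = eR2 z)"

lemma e0_inj: "x < 3 \<Longrightarrow> y < 3 \<Longrightarrow> e0 x = e0 y \<Longrightarrow> x = y"
  using e0 unfolding bij_betw_def inj_on_def by auto

lemma inv3:
  assumes eb: "bij_betw (ee :: nat \<Rightarrow> 'b) {0..<3} A" and y: "y \<in> A"
  shows "\<exists>!w. w < 3 \<and> ee w = y"
proof -
  obtain w where w: "w \<in> {0..<3}" "ee w = y" using y bij_betw_imp_surj_on[OF eb] by (metis imageE)
  show ?thesis
  proof (rule ex1I[of _ w])
    show "w < 3 \<and> ee w = y" using w by simp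
    show "\<And>w'. w' < 3 \<and> ee w' = y \<Longrightarrow> w' = w"
    proof -
      fix w' assume "w' < 3 \<and> ee w' = y"
      then show "w' = w" using w bij_betw_imp_inj_on[OF eb] by (auto dest: inj_onD)
    qed
  qed
qed

lemma P2: assumes "z < 3" shows "P2 z < 3" "e0 (P2 z) = eR2 z"
proof -
  have "eR2 z \<in> L 0" using eR2 assms by (auto simp: bij_betw_def)
  note th = theI'[OF inv3[OF e0 this], folded P2_def]
  show "P2 z < 3" "e0 (P2 z) = eR2 z" using th by auto
qed

lemma P2_inj: "inj_on P2 {0..<3}"
proof (rule inj_onI)
  fix z z' assume zz: "z \<in> {0..<3}" "z' \<in> {0..<3}" "P2 z = P2 z'"
  then have "eR2 z = eR2 z'" using P2(2)[of z] P2(2)[of z'] by auto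
  then show "z = z'" using eR2 zz by (auto simp: bij_betw_def dest: inj_onD)
qed

definition pp where "pp = (SOME p. p < 6 \<and> (\<forall>z<3. perms ! p ! z = P2 z))"

lemma pp: "pp < 6" "\<And>z. z < 3 \<Longrightarrow> perms ! pp ! z = P2 z"
proof -
  have "\<exists>p<6. \<forall>z<3. perms ! p ! z = P2 z" using perm3[OF _ P2_inj] P2(1) by auto
  then have "\<exists>p. p < 6 \<and> (\<forall>z<3. perms ! p ! z = P2 z)" by auto
  note th = someI_ex[OF this, folded pp_def]
  show "pp < 6" "\<And>z. z < 3 \<Longrightarrow> perms ! pp ! z = P2 z" using th by auto
qed

definition W where "W = (SOME W. countok S0.code S1.code S2.code W \<and> list_all (layerok S0.code S1.code pp S2.code) W)"

lemma W: "countok S0.code S1.code S2.code W" "list_all (layerok S0.code S1.code pp S2.code) W"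
proof -
  have "\<exists>W. countok S0.code S1.code S2.code W \<and> list_all (layerok S0.code S1.code pp S2.code) W"
    using wit_exists[OF S0.code_lt S1.code_lt pp(1) S2.code_lt] .
  note th = someI_ex[OF this, folded W_def]
  show "countok S0.code S1.code S2.code W" "list_all (layerok S0.code S1.code pp S2.code) W" using th by auto
qed

lemma lenW: "length W = 6" using W(1) unfolding countok_def by simp

definition "lx0 t = fst (W ! t)"
definition "lx1 t = fst (snd (W ! t))"
definition "lx2 t = fst (snd (snd (W ! t)))"
definition "lb0 t = fst (snd (snd (snd (W ! t))))"
definition "lb1 t = fst (snd (snd (snd (snd (W ! t)))))"
definition "lb2 t = snd (snd (snd (snd (snd (W ! t)))))"

lemma Wt: "W ! t = (lx0 t, lx1 t, lx2 t, lb0 t, lb1 t, lb2 t)"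
  unfolding lx0_def lx1_def lx2_def lb0_def lb1_def lb2_def by simp

lemma layer: assumes "t < 6"
  shows "lx0 t < 3" "lx1 t < 3" "lx2 t < 3" "lb0 t < 2" "lb1 t < 2" "lb2 t < 2"
    "segok S0.code id (lx0 t) (lx1 t) (lb0 t)" "segok S1.code id (lx1 t) (lx2 t) (lb1 t)"
    "segok S2.code (\<lambda>z. perms ! pp ! z) (lx2 t) (lx0 t) (lb2 t)"
proof -
  have "layerok S0.code S1.code pp S2.code (W ! t)" using W(2) assms lenW by (simp add: list_all_length)
  then have "layerok S0.code S1.code pp S2.code (lx0 t, lx1 t, lx2 t, lb0 t, lb1 t, lb2 t)" by (simp only: Wt)
  then show "lx0 t < 3" "lx1 t < 3" "lx2 t < 3" "lb0 t < 2" "lb1 t < 2" "lb2 t < 2"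
    "segok S0.code id (lx0 t) (lx1 t) (lb0 t)" "segok S1.code id (lx1 t) (lx2 t) (lb1 t)"
    "segok S2.code (\<lambda>z. perms ! pp ! z) (lx2 t) (lx0 t) (lb2 t)"
    unfolding layerok_def by auto
qed

definition yy where "yy t = (THE w. w < 3 \<and> eR2 w = e0 (lx0 t))"

lemma yy: assumes "t < 6" shows "yy t < 3" "eR2 (yy t) = e0 (lx0 t)" "P2 (yy t) = lx0 t"
proof -
  have "e0 (lx0 t) \<in> L 0" using e0 layer(1)[OF assms] by (auto simp: bij_betw_def)
  note th = theI'[OF inv3[OF eR2 this], folded yy_def]
  show a: "yy t < 3" "eR2 (yy t) = e0 (lx0 t)" using th by auto
  have "e0 (P2 (yy t)) = e0 (lx0 t)" using P2(2)[OF a(1)] a(2) by simp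
  then show "P2 (yy t) = lx0 t" using e0_inj P2(1)[OF a(1)] layer(1)[OF assms] by blast
qed

lemma seg2ok: assumes "t < 6" shows "segok S2.code id (lx2 t) (yy t) (lb2 t)"
proof -
  note l = layer[OF assms] and y = yy[OF assms]
  show ?thesis
  proof (cases "S2.code = 0")
    case True
    then have "lx0 t \<noteq> P2 (lx2 t)" using l(9) pp(2)[OF l(3)] unfolding segok_def by simp
    then have "yy t \<noteq> lx2 t" using y(3) by auto
    then show ?thesis using True unfolding segok_def by simp
  next
    case False
    have c: "lb2 t < 2" "lam (S2.code - 1) (lb2 t) \<noteq> lx2 t"
      "perms ! pp ! (lam (S2.code - 1) (1 - lb2 t)) \<noteq> lx0 t"
      using l(9) False unfolding segok_def by auto
    have "S2.code - 1 < 3" using S2.code_lt False by simp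
    then have "lam (S2.code - 1) (1 - lb2 t) < 3" by (intro lam_lt) auto
    then have "P2 (lam (S2.code - 1) (1 - lb2 t)) \<noteq> lx0 t" using c(3) pp(2) by simp
    then have "lam (S2.code - 1) (1 - lb2 t) \<noteq> yy t" using y(3) by auto
    then show ?thesis using False c unfolding segok_def by simp
  qed
qed

definition colr where
  "colr t v = (if v \<le> b1 then S0.col (lx0 t) (lx1 t) (lb0 t) v
     else if v \<le> b2 then S1.col (lx1 t) (lx2 t) (lb1 t) v
     else S2.col (lx2 t) (yy t) (lb2 t) v)"

lemma colr_S0: "v \<le> b1 \<Longrightarrow> colr t v = S0.col (lx0 t) (lx1 t) (lb0 t) v"
  unfolding colr_def by simp

lemma colr_S1: "b1 \<le> v \<Longrightarrow> v \<le> b2 \<Longrightarrow> colr t v = S1.col (lx1 t) (lx2 t) (lb1 t) v"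
proof (cases "v = b1")
  case True
  have "colr t v = S0.eR (lx1 t)" using True Bfacts unfolding colr_def S0.col_def by simp
  moreover have "S1.col (lx1 t) (lx2 t) (lb1 t) v = eb1 (lx1 t)" using True unfolding S1.col_def by simp
  ultimately show ?thesis unfolding eb1_def by simp
next
  case False
  assume "b1 \<le> v" "v \<le> b2"
  then show ?thesis using False unfolding colr_def by simp
qed

lemma colr_S2: "b2 \<le> v \<Longrightarrow> v < n \<Longrightarrow> colr t v = S2.col (lx2 t) (yy t) (lb2 t) v"
proof (cases "v = b2")
  case True
  have "colr t v = S1.eR (lx2 t)" using True Bfacts unfolding colr_def S1.col_def by simp
  moreover have "S2.col (lx2 t) (yy t) (lb2 t) v = eb2 (lx2 t)" using True unfolding S2.col_def by simp
  ultimately show ?thesis unfolding eb2_def by simp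
next
  case False
  assume "b2 \<le> v" "v < n"
  then show ?thesis using False Bfacts unfolding colr_def by simp
qed

lemma colr_0: "t < 6 \<Longrightarrow> colr t 0 = S2.col (lx2 t) (yy t) (lb2 t) n"
proof -
  assume t: "t < 6"
  have "colr t 0 = e0 (lx0 t)" unfolding colr_def S0.col_def by simp
  moreover have "S2.col (lx2 t) (yy t) (lb2 t) n = eR2 (yy t)"
    using Bfacts unfolding S2.col_def eR2_def by simp
  ultimately show ?thesis using yy(2)[OF t] by simp
qed

lemma indep_step: assumes t: "t < 6" and i: "i < n"
  shows "\<not> EH (colr t i) (colr t (Suc i mod n))"
proof -
  note l = layer[OF t]
  consider (a) "i < b1" | (b) "b1 \<le> i" "i < b2" | (c) "b2 \<le> i" by linarith
  then show ?thesis
  proof cases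
    case a
    have sm: "Suc i mod n = Suc i" using a Bfacts by simp
    have "\<not> EH (S0.col (lx0 t) (lx1 t) (lb0 t) i) (S0.col (lx0 t) (lx1 t) (lb0 t) (Suc i))"
      by (rule S0.seg_ok) (use l a in auto)
    then show ?thesis using a sm colr_S0[of i t] colr_S0[of "Suc i" t] by simp
  next
    case b
    have sm: "Suc i mod n = Suc i" using b Bfacts by simp
    have "\<not> EH (S1.col (lx1 t) (lx2 t) (lb1 t) i) (S1.col (lx1 t) (lx2 t) (lb1 t) (Suc i))"
      by (rule S1.seg_ok) (use l b in auto)
    then show ?thesis using b sm colr_S1[of i t] colr_S1[of "Suc i" t] by simp
  next
    case c
    have ok: "\<not> EH (S2.col (lx2 t) (yy t) (lb2 t) i) (S2.col (lx2 t) (yy t) (lb2 t) (Suc i))"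
      by (rule S2.seg_ok) (use l c i yy[OF t] seg2ok[OF t] in auto)
    show ?thesis
    proof (cases "Suc i = n")
      case True
      then have "Suc i mod n = 0" by simp
      then show ?thesis using ok True colr_0[OF t] colr_S2[of i t] c i by simp
    next
      case False
      then have "Suc i mod n = Suc i" "Suc i < n" using i by auto
      then show ?thesis using ok colr_S2[of i t] colr_S2[of "Suc i" t] c i by simp
    qed
  qed
qed

lemma cnt_conv: "card {t\<in>{0..<6}. P (W ! t)} = length (filter P W)"
proof -
  have "length (filter P W) = card {i. i < length W \<and> P (W ! i)}" by (rule length_filter_conv_card)
  moreover have "{i. i < length W \<and> P (W ! i)} = {t\<in>{0..<6}. P (W ! t)}" using lenW by auto
  ultimately show ?thesis by simp
qed

lemma cnt_x: assumes "j < 3"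
  shows "card {t\<in>{0..<6}. lx0 t = j} = 2" "card {t\<in>{0..<6}. lx1 t = j} = 2" "card {t\<in>{0..<6}. lx2 t = j} = 2"
proof -
  have j: "j \<in> {0,1,2}" using assms by auto
  have c: "length (filter (\<lambda>(x0,x1,x2,b0,b1,b2). x0 = j) W) = 2"
     "length (filter (\<lambda>(x0,x1,x2,b0,b1,b2). x1 = j) W) = 2"
     "length (filter (\<lambda>(x0,x1,x2,b0,b1,b2). x2 = j) W) = 2"
    using W(1) j unfolding countok_def by blast+
  have e: "{t\<in>{0..<6}. lx0 t = j} = {t\<in>{0..<6}. (\<lambda>(x0,x1,x2,b0,b1,b2). x0 = j) (W ! t)}"
    "{t\<in>{0..<6}. lx1 t = j} = {t\<in>{0..<6}. (\<lambda>(x0,x1,x2,b0,b1,b2). x1 = j) (W ! t)}"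
    "{t\<in>{0..<6}. lx2 t = j} = {t\<in>{0..<6}. (\<lambda>(x0,x1,x2,b0,b1,b2). x2 = j) (W ! t)}"
    by (simp_all only: Wt prod.case)
  show "card {t\<in>{0..<6}. lx0 t = j} = 2" "card {t\<in>{0..<6}. lx1 t = j} = 2" "card {t\<in>{0..<6}. lx2 t = j} = 2"
    using c unfolding e cnt_conv by simp_all
qed

lemma cnt_b_aux:
  fixes a :: "nat \<Rightarrow> nat"
  assumes lt: "\<forall>t<6. a t < 2" and c0: "card {t\<in>{0..<6}. a t = 0} = 3" and j: "j < 2"
  shows "card {t\<in>{0..<6}. a t = j} = 3"
proof (cases "j = 0")
  case True then show ?thesis using c0 by simp
next
  case False
  then have j1: "j = 1" using j by simp
  have "{t\<in>{0..<6}. a t = 1} = {0..<6} - {t\<in>{0..<6}. a t = 0}" using lt by auto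
  moreover have "card ({0..<6::nat} - {t\<in>{0..<6}. a t = 0}) = 6 - 3"
    using c0 by (subst card_Diff_subset) auto
  ultimately show ?thesis using j1 by simp
qed

lemma cnt_b: assumes "j < 2"
  shows "S0.code \<noteq> 0 \<Longrightarrow> card {t\<in>{0..<6}. lb0 t = j} = 3"
    "S1.code \<noteq> 0 \<Longrightarrow> card {t\<in>{0..<6}. lb1 t = j} = 3"
    "S2.code \<noteq> 0 \<Longrightarrow> card {t\<in>{0..<6}. lb2 t = j} = 3"
proof -
  have e: "{t\<in>{0..<6}. lb0 t = 0} = {t\<in>{0..<6}. (\<lambda>(x0,x1,x2,b0,b1,b2). b0 = 0) (W ! t)}"
    "{t\<in>{0..<6}. lb1 t = 0} = {t\<in>{0..<6}. (\<lambda>(x0,x1,x2,b0,b1,b2). b1 = 0) (W ! t)}"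
    "{t\<in>{0..<6}. lb2 t = 0} = {t\<in>{0..<6}. (\<lambda>(x0,x1,x2,b0,b1,b2). b2 = 0) (W ! t)}"
    by (simp_all only: Wt prod.case)
  have k: "card {t\<in>{0..<6}. lb0 t = 0} = length (filter (\<lambda>(x0,x1,x2,b0,b1,b2). b0 = 0) W)"
    "card {t\<in>{0..<6}. lb1 t = 0} = length (filter (\<lambda>(x0,x1,x2,b0,b1,b2). b1 = 0) W)"
    "card {t\<in>{0..<6}. lb2 t = 0} = length (filter (\<lambda>(x0,x1,x2,b0,b1,b2). b2 = 0) W)"
    by (simp_all only: e cnt_conv)
  show "S0.code \<noteq> 0 \<Longrightarrow> card {t\<in>{0..<6}. lb0 t = j} = 3"
    by (rule cnt_b_aux[OF _ _ assms]) (use layer(4) W(1) k(1) in \<open>auto simp: countok_def\<close>)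
  show "S1.code \<noteq> 0 \<Longrightarrow> card {t\<in>{0..<6}. lb1 t = j} = 3"
    by (rule cnt_b_aux[OF _ _ assms]) (use layer(5) W(1) k(2) in \<open>auto simp: countok_def\<close>)
  show "S2.code \<noteq> 0 \<Longrightarrow> card {t\<in>{0..<6}. lb2 t = j} = 3"
    by (rule cnt_b_aux[OF _ _ assms]) (use layer(6) W(1) k(3) in \<open>auto simp: countok_def\<close>)
qed

lemma count_via:
  fixes a :: "nat \<Rightarrow> nat" and \<phi> :: "nat \<Rightarrow> 'b"
  assumes bij: "bij_betw \<phi> {0..<k} A" and eq: "\<forall>t<6. colr t v = \<phi> (a t)"
    and alt: "\<forall>t<6. a t < k" and cnt: "\<forall>j<k. card {t\<in>{0..<6}. a t = j} = m" and y: "y \<in> A"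
  shows "card {t\<in>{0..<6}. colr t v = y} = m"
proof -
  obtain j where j: "j < k" "\<phi> j = y" using y bij_betw_imp_surj_on[OF bij] by (metis atLeastLessThan_iff imageE)
  have "{t\<in>{0..<6}. colr t v = y} = {t\<in>{0..<6}. a t = j}"
  proof (intro set_eqI iffI)
    fix t assume "t \<in> {t\<in>{0..<6}. colr t v = y}"
    then have t: "t < 6" "\<phi> (a t) = \<phi> j" using eq j by auto
    then have "a t = j" using bij_betw_imp_inj_on[OF bij] alt j(1) by (auto dest: inj_onD)
    then show "t \<in> {t\<in>{0..<6}. a t = j}" using t by simp
  next
    fix t assume "t \<in> {t\<in>{0..<6}. a t = j}"
    then show "t \<in> {t\<in>{0..<6}. colr t v = y}" using eq j by auto
  qed
  then show ?thesis using cnt j by simp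
qed

lemma vertex_rep: assumes v: "v < n"
  shows "\<exists>(\<phi> :: nat \<Rightarrow> 'b) (a :: nat \<Rightarrow> nat) k m. bij_betw \<phi> {0..<k} (L v) \<and> (\<forall>t<6. colr t v = \<phi> (a t)) \<and>
     (\<forall>t<6. a t < k) \<and> (\<forall>j<k. card {t\<in>{0..<6}. a t = j} = m) \<and> m * card (L v) = 6"
proof -
  consider (z) "v = 0" | (i0) "0 < v" "v < b1" | (e1) "v = b1" | (i1) "b1 < v" "v < b2" | (e2) "v = b2"
    | (i2) "b2 < v" by linarith
  then show ?thesis
  proof cases
    case z
    have "\<forall>t<6. colr t v = e0 (lx0 t)" using z unfolding colr_def S0.col_def by simp
    then show ?thesis using e0 layer(1) cnt_x(1) z c0 by (intro exI[of _ e0] exI[of _ lx0] exI[of _ 3] exI[of _ 2]) auto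
  next
    case e1
    have "\<forall>t<6. colr t v = eb1 (lx1 t)" using e1 colr_S1 Bfacts unfolding S1.col_def by simp
    then show ?thesis using eb1 layer(2) cnt_x(2) e1 Bfacts by (intro exI[of _ eb1] exI[of _ lx1] exI[of _ 3] exI[of _ 2]) auto
  next
    case e2
    have "\<forall>t<6. colr t v = eb2 (lx2 t)" using e2 colr_S2 Bfacts unfolding S2.col_def by simp
    then show ?thesis using eb2 layer(3) cnt_x(3) e2 Bfacts by (intro exI[of _ eb2] exI[of _ lx2] exI[of _ 3] exI[of _ 2]) auto
  next
    case i0
    have nd: "\<not> S0.direct" using i0 unfolding S0.direct_def by auto
    have cd: "S0.code \<noteq> 0" using nd unfolding S0.code_def by simp
    have "\<forall>t<6. colr t v = S0.h v (S0.e1 (lb0 t))" using i0 colr_S0 unfolding S0.col_def by simp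
    moreover have "card (L v) = 2" using Bfacts(6)[of v] i0 Bfacts v by simp
    ultimately show ?thesis using S0.inner_bij[of v] i0 layer(4) cnt_b(1)[OF _ cd]
      by (intro exI[of _ "\<lambda>b. S0.h v (S0.e1 b)"] exI[of _ lb0] exI[of _ 2] exI[of _ 3]) auto
  next
    case i1
    have nd: "\<not> S1.direct" using i1 unfolding S1.direct_def by auto
    have cd: "S1.code \<noteq> 0" using nd unfolding S1.code_def by simp
    have "\<forall>t<6. colr t v = S1.h v (S1.e1 (lb1 t))" using i1 colr_S1 unfolding S1.col_def by simp
    moreover have "card (L v) = 2" using Bfacts(6)[of v] i1 Bfacts v by simp
    ultimately show ?thesis using S1.inner_bij[of v] i1 layer(5) cnt_b(2)[OF _ cd]
      by (intro exI[of _ "\<lambda>b. S1.h v (S1.e1 b)"] exI[of _ lb1] exI[of _ 2] exI[of _ 3]) auto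
  next
    case i2
    have nd: "\<not> S2.direct" using i2 v unfolding S2.direct_def by auto
    have cd: "S2.code \<noteq> 0" using nd unfolding S2.code_def by simp
    have "\<forall>t<6. colr t v = S2.h v (S2.e1 (lb2 t))" using i2 v colr_S2 unfolding S2.col_def by simp
    moreover have "card (L v) = 2" using Bfacts(6)[of v] i2 Bfacts v by simp
    ultimately show ?thesis using S2.inner_bij[of v] i2 v layer(6) cnt_b(3)[OF _ cd]
      by (intro exI[of _ "\<lambda>b. S2.h v (S2.e1 b)"] exI[of _ lb2] exI[of _ 2] exI[of _ 3]) auto
  qed
qed

lemma colr_in: "t < 6 \<Longrightarrow> v < n \<Longrightarrow> colr t v \<in> L v"
  using vertex_rep[of v] by (auto simp: bij_betw_def)

lemma count_col: assumes "v < n" "y \<in> L v"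
  shows "real (card {t\<in>{0..<6}. colr t v = y}) / 6 = 1 / real (card (L v))"
proof -
  obtain \<phi> a k m where r: "bij_betw (\<phi> :: nat \<Rightarrow> 'b) {0..<k} (L v)" "\<forall>t<6. colr t v = \<phi> (a t)"
    "\<forall>t<6. (a :: nat \<Rightarrow> nat) t < k" "\<forall>j<k. card {t\<in>{0..<6}. a t = j} = m" "m * card (L v) = 6"
    using vertex_rep[OF assms(1)] by blast
  have "card {t\<in>{0..<6}. colr t v = y} = m" using count_via[OF r(1-4) assms(2)] .
  moreover have "real m * real (card (L v)) = 6" using r(5) by (metis of_nat_mult of_nat_numeral)
  moreover have "card (L v) > 0" using r(5) by (cases "card (L v)") auto
  ultimately show ?thesis by (simp add: field_simps)
qed

definition It where "It t = colr t ` {0..<n}"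

lemma It_mem: assumes t: "t < 6" and v: "v < n" and y: "y \<in> L v"
  shows "y \<in> It t \<longleftrightarrow> colr t v = y"
proof
  assume "y \<in> It t"
  then obtain w where w: "w < n" "y = colr t w" unfolding It_def by auto
  have "colr t w \<in> L w" using colr_in[OF t w(1)] .
  show "colr t v = y"
  proof (rule ccontr)
    assume ne: "colr t v \<noteq> y"
    then have "w \<noteq> v" using w by auto
    then have "L w \<inter> L v = {}" using cc_disj[OF cov] w(1) v by auto
    then show False using \<open>colr t w \<in> L w\<close> w(2) y by auto
  qed
next
  assume "colr t v = y"
  then show "y \<in> It t" using v unfolding It_def by auto
qed

lemma It_trans: assumes t: "t < 6" shows "indep_transversal {0..<n} L VH EH (It t)"
proof -
  have sg: "simple_graph VH EH" using cc_simple[OF cov] .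
  have sub: "It t \<subseteq> VH"
  proof
    fix a assume "a \<in> It t"
    then obtain v where v: "v < n" "a = colr t v" unfolding It_def by auto
    then show "a \<in> VH" using colr_in[OF t v(1)] cc_union[OF cov] by auto
  qed
  have ind: "\<forall>a\<in>It t. \<forall>b\<in>It t. \<not> EH a b"
  proof (intro ballI)
    fix a b assume "a \<in> It t" "b \<in> It t"
    then obtain u w where uw: "u < n" "w < n" "a = colr t u" "b = colr t w" unfolding It_def by auto
    show "\<not> EH a b"
    proof (cases "u = w")
      case True then show ?thesis using uw sg_irrefl[OF sg] by simp
    next
      case ne: False
      show ?thesis
      proof (cases "cycle_edge n u w")
        case True
        then consider "w = Suc u mod n" | "u = Suc w mod n" unfolding cycle_edge_def by auto
        then show ?thesis
        proof cases
          case 1 then show ?thesis using indep_step[OF t uw(1)] uw by simp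
        next
          case 2
          then have "\<not> EH b a" using indep_step[OF t uw(2)] uw by simp
          then show ?thesis using sg_sym[OF sg] by blast
        qed
      next
        case False
        then show ?thesis using cc_nonedge[OF cov _ _ ne False] uw colr_in[OF t] by auto
      qed
    qed
  qed
  have card: "\<forall>v\<in>{0..<n}. card (It t \<inter> L v) = 1"
  proof
    fix v assume "v \<in> {0..<n}"
    then have v: "v < n" by simp
    have "It t \<inter> L v = {colr t v}" using It_mem[OF t v] colr_in[OF t v] by auto
    then show "card (It t \<inter> L v) = 1" by simp
  qed
  show ?thesis unfolding indep_transversal_def using sub ind card by auto
qed

theorem packing: "has_fractional_packing {0..<n} L VH EH"
proof -
  define p where "p = map_pmf It (pmf_of_set {0..<6::nat})"
  have supp: "\<forall>I\<in>set_pmf p. indep_transversal {0..<n} L VH EH I"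
    unfolding p_def using It_trans by auto
  have prob: "measure_pmf.prob p {I. y \<in> I} = 1 / real (card (L v))" if v: "v \<in> {0..<n}" and y: "y \<in> L v" for v y
  proof -
    have "measure_pmf.prob p {I. y \<in> I} = measure_pmf.prob (pmf_of_set {0..<6::nat}) (It -` {I. y \<in> I})"
      unfolding p_def by (rule measure_map_pmf)
    also have "\<dots> = real (card ({0..<6::nat} \<inter> It -` {I. y \<in> I})) / real (card {0..<6::nat})"
      by (rule measure_pmf_of_set) auto
    also have "{0..<6::nat} \<inter> It -` {I. y \<in> I} = {t\<in>{0..<6}. colr t v = y}"
      using It_mem v y by auto
    also have "real (card {0..<6::nat}) = 6" by simp
    also have "real (card {t\<in>{0..<6}. colr t v = y}) / 6 = 1 / real (card (L v))"
      using count_col v y by simp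
    finally show ?thesis .
  qed
  show ?thesis unfolding has_fractional_packing_def
    by (rule exI[of _ p]) (use supp prob in auto)
qed

end

lemma perm_cover:
  assumes cov: "corr_cover VG EG L VH EH" and bij: "bij_betw \<rho> VG VG"
    and edge: "\<And>u v. u \<in> VG \<Longrightarrow> v \<in> VG \<Longrightarrow> EG (\<rho> u) (\<rho> v) = EG u v"
  shows "corr_cover VG EG (L \<circ> \<rho>) VH EH"
proof -
  have img: "\<rho> ` VG = VG" using bij by (simp add: bij_betw_def)
  have inj: "\<And>u v. u \<in> VG \<Longrightarrow> v \<in> VG \<Longrightarrow> \<rho> u = \<rho> v \<Longrightarrow> u = v"
    using bij by (auto simp: bij_betw_def dest: inj_onD)
  have inV: "\<And>u. u \<in> VG \<Longrightarrow> \<rho> u \<in> VG" using img by auto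
  show ?thesis unfolding corr_cover_def
  proof (intro conjI)
    show "simple_graph VH EH" using cc_simple[OF cov] .
    have "(\<Union>v\<in>VG. (L \<circ> \<rho>) v) = (\<Union>w\<in>\<rho> ` VG. L w)" by auto
    then show "(\<Union>v\<in>VG. (L \<circ> \<rho>) v) = VH" using img cc_union[OF cov] by simp
    show "\<forall>u\<in>VG. \<forall>v\<in>VG. u \<noteq> v \<longrightarrow> (L \<circ> \<rho>) u \<inter> (L \<circ> \<rho>) v = {}"
    proof (intro ballI impI)
      fix u v assume a: "u \<in> VG" "v \<in> VG" "u \<noteq> v"
      then have "\<rho> u \<noteq> \<rho> v" using inj by blast
      then show "(L \<circ> \<rho>) u \<inter> (L \<circ> \<rho>) v = {}" using cc_disj[OF cov inV[OF a(1)] inV[OF a(2)]] by simp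
    qed
    show "\<forall>v\<in>VG. \<forall>x\<in>(L \<circ> \<rho>) v. \<forall>y\<in>(L \<circ> \<rho>) v. x \<noteq> y \<longrightarrow> EH x y"
      using cc_clique[OF cov] inV by auto
    show "\<forall>u\<in>VG. \<forall>v\<in>VG. u \<noteq> v \<longrightarrow> \<not> EG u v \<longrightarrow> (\<forall>x\<in>(L \<circ> \<rho>) u. \<forall>y\<in>(L \<circ> \<rho>) v. \<not> EH x y)"
    proof (intro ballI impI)
      fix u v x y assume a: "u \<in> VG" "v \<in> VG" "u \<noteq> v" "\<not> EG u v" "x \<in> (L \<circ> \<rho>) u" "y \<in> (L \<circ> \<rho>) v"
      have "\<rho> u \<noteq> \<rho> v" using inj a by blast
      moreover have "\<not> EG (\<rho> u) (\<rho> v)" using edge a by simp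
      ultimately show "\<not> EH x y" using cc_nonedge[OF cov inV[OF a(1)] inV[OF a(2)]] a by auto
    qed
    show "\<forall>u\<in>VG. \<forall>v\<in>VG. EG u v \<longrightarrow> (\<forall>x\<in>(L \<circ> \<rho>) u. \<forall>y\<in>(L \<circ> \<rho>) v. \<forall>y'\<in>(L \<circ> \<rho>) v. EH x y \<and> EH x y' \<longrightarrow> y = y')"
    proof (intro ballI impI)
      fix u v x y y' assume a: "u \<in> VG" "v \<in> VG" "EG u v" "x \<in> (L \<circ> \<rho>) u" "y \<in> (L \<circ> \<rho>) v" "y' \<in> (L \<circ> \<rho>) v" "EH x y \<and> EH x y'"
      have "EG (\<rho> u) (\<rho> v)" using edge a by simp
      then show "y = y'" using cc_match[OF cov inV[OF a(1)] inV[OF a(2)]] a by auto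
    qed
  qed
qed

lemma perm_packing:
  assumes pk: "has_fractional_packing VG (L \<circ> \<rho>) VH EH" and bij: "bij_betw \<rho> VG VG"
  shows "has_fractional_packing VG L VH EH"
proof -
  have img: "\<rho> ` VG = VG" using bij by (simp add: bij_betw_def)
  obtain p where p: "\<forall>I\<in>set_pmf p. indep_transversal VG (L \<circ> \<rho>) VH EH I"
    "\<forall>v\<in>VG. \<forall>x\<in>(L \<circ> \<rho>) v. measure_pmf.prob p {I. x \<in> I} = 1 / real (card ((L \<circ> \<rho>) v))"
    using pk unfolding has_fractional_packing_def by blast
  have t: "indep_transversal VG L VH EH I" if "I \<in> set_pmf p" for I
  proof -
    have a: "I \<subseteq> VH" "\<forall>x\<in>I. \<forall>y\<in>I. \<not> EH x y" "\<forall>v\<in>VG. card (I \<inter> L (\<rho> v)) = 1"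
      using p(1) that unfolding indep_transversal_def by auto
    have "\<forall>w\<in>VG. card (I \<inter> L w) = 1"
    proof
      fix w assume "w \<in> VG"
      then obtain v where "v \<in> VG" "w = \<rho> v" using img by auto
      then show "card (I \<inter> L w) = 1" using a(3) by auto
    qed
    then show ?thesis using a unfolding indep_transversal_def by auto
  qed
  have pr: "\<forall>w\<in>VG. \<forall>x\<in>L w. measure_pmf.prob p {I. x \<in> I} = 1 / real (card (L w))"
  proof (intro ballI)
    fix w x assume w: "w \<in> VG" and x: "x \<in> L w"
    obtain v where v: "v \<in> VG" "w = \<rho> v" using img w by auto
    then show "measure_pmf.prob p {I. x \<in> I} = 1 / real (card (L w))" using p(2) x by auto
  qed
  show ?thesis unfolding has_fractional_packing_def using t pr by blast
qed

definition rot :: "nat \<Rightarrow> nat \<Rightarrow> nat \<Rightarrow> nat" where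
  "rot n r i = (if i + r < n then i + r else i + r - n)"
lemma suc_mod: "x < n \<Longrightarrow> Suc x mod n = (if Suc x = n then 0 else Suc x)"
  by auto
lemma rot_inj: "r < n \<Longrightarrow> i < n \<Longrightarrow> j < n \<Longrightarrow> rot n r i = rot n r j \<Longrightarrow> i = j"
  unfolding rot_def by (simp split: if_splits; arith)
lemma rot_lt: "r < n \<Longrightarrow> i < n \<Longrightarrow> rot n r i < n"
  unfolding rot_def by (simp split: if_splits; arith)
lemma rot_suc: assumes a: "r < n" "u < n" shows "rot n r (Suc u mod n) = Suc (rot n r u) mod n"
proof -
  have l: "rot n r u < n" using rot_lt a .
  show ?thesis unfolding suc_mod[OF a(2)] suc_mod[OF l] using a unfolding rot_def by (simp split: if_splits; arith)
qed

lemma rot_bij: assumes "r < n" shows "bij_betw (rot n r) {0..<n} {0..<n}"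
proof -
  have "inj_on (rot n r) {0..<n}" by (rule inj_onI) (use rot_inj assms in auto)
  moreover have "rot n r ` {0..<n} \<subseteq> {0..<n}" using rot_lt assms by auto
  ultimately show ?thesis by (intro inj_card_bij) auto
qed

lemma rot_edge:
  assumes r: "r < n" and u: "u < n" and v: "v < n"
  shows "cycle_edge n (rot n r u) (rot n r v) = cycle_edge n u v"
proof -
  have ru: "rot n r u < n" "rot n r v < n" using rot_lt r u v by auto
  have su: "Suc u mod n < n" "Suc v mod n < n" using u by auto
  have a: "(rot n r v = Suc (rot n r u) mod n) = (v = Suc u mod n)"
    using rot_suc[OF r u] rot_inj[OF r v su(1)] by auto
  have b: "(rot n r u = Suc (rot n r v) mod n) = (u = Suc v mod n)"
    using rot_suc[OF r v] rot_inj[OF r u su(2)] by auto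
  show ?thesis unfolding cycle_edge_def using a b ru u v by simp
qed

lemma rot_card: assumes r: "r < n" shows "card {v\<in>{0..<n}. P (rot n r v)} = card {v\<in>{0..<n}. P v}"
proof -
  have inj: "inj_on (rot n r) {v\<in>{0..<n}. P (rot n r v)}"
    by (rule inj_onI) (use rot_inj r in auto)
  have "rot n r ` {v\<in>{0..<n}. P (rot n r v)} = {v\<in>{0..<n}. P v}"
  proof (intro set_eqI iffI)
    fix w assume "w \<in> rot n r ` {v\<in>{0..<n}. P (rot n r v)}"
    then show "w \<in> {v\<in>{0..<n}. P v}" using rot_lt r by auto
  next
    fix w assume w: "w \<in> {v\<in>{0..<n}. P v}"
    then obtain v where "v \<in> {0..<n}" "w = rot n r v"
      using bij_betw_imp_surj_on[OF rot_bij[OF r]] by (metis (no_types, lifting) imageE mem_Collect_eq)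
    then show "w \<in> rot n r ` {v\<in>{0..<n}. P (rot n r v)}" using w by auto
  qed
  then show ?thesis using card_image[OF inj] by simp
qed

lemma rot_0: "r < n \<Longrightarrow> rot n r 0 = r" by (simp add: rot_def)

lemma core_rot:
  assumes n3: "n \<ge> 3" and cov: "corr_cover {0..<n} (cycle_edge n) L VH EH"
    and sizes: "\<forall>v<n. finite (L v) \<and> (card (L v) = 2 \<or> card (L v) = 3)"
    and cB: "card {v\<in>{0..<n}. card (L v) = 3} = 3"
  shows "has_fractional_packing {0..<n} L VH EH"
proof -
  have "{v\<in>{0..<n}. card (L v) = 3} \<noteq> {}" using cB by (metis card.empty zero_neq_numeral)
  then obtain r where "r \<in> {v\<in>{0..<n}. card (L v) = 3}" by blast
  then have r: "r < n" "card (L r) = 3" by auto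
  define L' where "L' = L \<circ> rot n r"
  have b: "bij_betw (rot n r) {0..<n} {0..<n}" using rot_bij[OF r(1)] .
  have cov': "corr_cover {0..<n} (cycle_edge n) L' VH EH"
    unfolding L'_def by (rule perm_cover[OF cov b]) (use rot_edge r in auto)
  have sizes': "\<forall>v<n. finite (L' v) \<and> (card (L' v) = 2 \<or> card (L' v) = 3)"
    using sizes rot_lt[OF r(1)] unfolding L'_def by auto
  have c0: "card (L' 0) = 3" using r rot_0 unfolding L'_def by simp
  have cB': "card {v\<in>{0..<n}. card (L' v) = 3} = 3"
    using rot_card[OF r(1), of "\<lambda>v. card (L v) = 3"] cB unfolding L'_def by simp
  have "has_fractional_packing {0..<n} L' VH EH"
    by (rule core.packing, rule core.intro) (use n3 cov' sizes' c0 cB' in auto)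
  then show ?thesis unfolding L'_def by (rule perm_packing[OF _ b])
qed

lemma sum_shrink:
  fixes n v :: nat and L :: "nat \<Rightarrow> 'b set"
  assumes "v < n" "x \<in> L v" "finite (L v)"
  shows "(\<Sum>u<n. card ((L(v := L v - {x})) u)) + 1 = (\<Sum>u<n. card (L u))"
proof -
  define g where "g u = card ((L(v := L v - {x})) u)" for u
  have vin: "v \<in> {..<n}" using assms by simp
  have a: "(\<Sum>u<n. g u) = g v + (\<Sum>u\<in>{..<n} - {v}. g u)"
    using sum.remove[of "{..<n}" v g] vin by simp
  have a2: "(\<Sum>u\<in>{..<n} - {v}. g u) = (\<Sum>u\<in>{..<n} - {v}. card (L u))"
    by (rule sum.cong) (auto simp: g_def)
  have b: "(\<Sum>u<n. card (L u)) = card (L v) + (\<Sum>u\<in>{..<n} - {v}. card (L u))"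
    using sum.remove[of "{..<n}" v "\<lambda>u. card (L u)"] vin by simp
  have gv: "g v = card (L v - {x})" unfolding g_def by simp
  have ne: "card (L v) > 0" using assms card_gt_0_iff by blast
  have c: "card (L v - {x}) + 1 = card (L v)" using assms ne by (simp add: card_Diff_singleton)
  show ?thesis using a a2 b c gv unfolding g_def by simp
qed

lemma main_gen:
  assumes n3: "n \<ge> 3"
  shows "\<And>L VH EH. corr_cover {0..<n} (cycle_edge n) L VH EH \<Longrightarrow>
     \<forall>v\<in>{0..<n}. finite (L v) \<and> card (L v) \<ge> 2 \<Longrightarrow>
     card {v\<in>{0..<n}. card (L v) \<ge> 3} \<ge> 3 \<Longrightarrow>
     (\<Sum>u<n. card (L u)) = m \<Longrightarrow> has_fractional_packing {0..<n} L VH EH"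
proof (induction m rule: less_induct)
  case (less m L VH EH)
  note cov = less.prems(1) and sz = less.prems(2) and big = less.prems(3) and sm = less.prems(4)
  have shrink: "has_fractional_packing {0..<n} L VH EH"
    if v: "v < n" and c3: "card (L v) \<ge> 3"
      and bigok: "\<forall>x\<in>L v. card {u\<in>{0..<n}. card ((L(v := L v - {x})) u) \<ge> 3} \<ge> 3" for v
  proof (rule mixture[OF cov])
    show "v \<in> {0..<n}" using v by simp
    show fin: "finite (L v)" using sz v by simp
    show "card (L v) \<ge> 2" using c3 by simp
    show "\<forall>x\<in>L v. has_fractional_packing {0..<n} (L(v := L v - {x})) (VH - {x}) (restrictE EH x)"
    proof
      fix x assume x: "x \<in> L v"
      have s: "(\<Sum>u<n. card ((L(v := L v - {x})) u)) + 1 = m" using sum_shrink[of v n x L, OF v x fin] sm by simp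
      show "has_fractional_packing {0..<n} (L(v := L v - {x})) (VH - {x}) (restrictE EH x)"
      proof (rule less.IH[of "(\<Sum>u<n. card ((L(v := L v - {x})) u))"])
        show "(\<Sum>u<n. card ((L(v := L v - {x})) u)) < m" using s by simp
        show "corr_cover {0..<n} (cycle_edge n) (L(v := L v - {x})) (VH - {x}) (restrictE EH x)"
          by (rule sub_cover[OF cov]) (use v x in auto)
        show "\<forall>u\<in>{0..<n}. finite ((L(v := L v - {x})) u) \<and> 2 \<le> card ((L(v := L v - {x})) u)"
        proof
          fix u assume u: "u \<in> {0..<n}"
          show "finite ((L(v := L v - {x})) u) \<and> 2 \<le> card ((L(v := L v - {x})) u)"
          proof (cases "u = v")
            case True
            have "card (L v - {x}) = card (L v) - 1" using fin x by (simp add: card_Diff_singleton)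
            then show ?thesis using True c3 fin by simp
          next
            case False
            then show ?thesis using sz u by simp
          qed
        qed
        show "3 \<le> card {u\<in>{0..<n}. 3 \<le> card ((L(v := L v - {x})) u)}" using bigok x by simp
      qed simp
    qed
  qed
  show ?case
  proof (cases "\<exists>v<n. card (L v) \<ge> 4")
    case True
    then obtain v where v: "v < n" "card (L v) \<ge> 4" by auto
    show ?thesis
    proof (rule shrink[OF v(1)])
      show "card (L v) \<ge> 3" using v by simp
      show "\<forall>x\<in>L v. card {u\<in>{0..<n}. card ((L(v := L v - {x})) u) \<ge> 3} \<ge> 3"
      proof
        fix x assume x: "x \<in> L v"
        have "card (L v - {x}) \<ge> 3" using v x sz by (simp add: card_Diff_singleton)
        then have "{u\<in>{0..<n}. card ((L(v := L v - {x})) u) \<ge> 3} = {u\<in>{0..<n}. card (L u) \<ge> 3}"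
          using v by auto
        then show "card {u\<in>{0..<n}. card ((L(v := L v - {x})) u) \<ge> 3} \<ge> 3" using big by simp
      qed
    qed
  next
    case False
    then have le3: "\<forall>v<n. card (L v) \<le> 3" by auto
    have eqset: "{v\<in>{0..<n}. card (L v) \<ge> 3} = {v\<in>{0..<n}. card (L v) = 3}" using le3 by auto
    show ?thesis
    proof (cases "card {v\<in>{0..<n}. card (L v) \<ge> 3} \<ge> 4")
      case True
      then have "{v\<in>{0..<n}. card (L v) \<ge> 3} \<noteq> {}" by (metis card.empty not_numeral_le_zero)
      then obtain v where "v \<in> {v\<in>{0..<n}. card (L v) \<ge> 3}" by blast
      then have v: "v < n" "card (L v) = 3" using le3 by auto
      show ?thesis
      proof (rule shrink[OF v(1)])
        show "card (L v) \<ge> 3" using v by simp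
        show "\<forall>x\<in>L v. card {u\<in>{0..<n}. card ((L(v := L v - {x})) u) \<ge> 3} \<ge> 3"
        proof
          fix x assume x: "x \<in> L v"
          have "card (L v - {x}) = 2" using v x sz by (simp add: card_Diff_singleton)
          then have e: "{u\<in>{0..<n}. card ((L(v := L v - {x})) u) \<ge> 3} = {u\<in>{0..<n}. card (L u) \<ge> 3} - {v}"
            by auto
          have "card ({u\<in>{0..<n}. card (L u) \<ge> 3} - {v}) = card {u\<in>{0..<n}. card (L u) \<ge> 3} - 1"
            using v by (simp add: card_Diff_singleton)
          then show "card {u\<in>{0..<n}. card ((L(v := L v - {x})) u) \<ge> 3} \<ge> 3" using e True by simp
        qed
      qed
    next
      case False
      then have "card {v\<in>{0..<n}. card (L v) = 3} = 3" using big eqset by simp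
      moreover have "\<forall>v<n. finite (L v) \<and> (card (L v) = 2 \<or> card (L v) = 3)"
      proof (intro allI impI)
        fix v assume "v < n"
        then have "finite (L v)" "card (L v) \<ge> 2" "card (L v) \<le> 3" using sz le3 by auto
        then show "finite (L v) \<and> (card (L v) = 2 \<or> card (L v) = 3)" by auto
      qed
      ultimately show ?thesis using core_rot[OF n3 cov] by simp
    qed
  qed
qed

theorem mainTheorem14:
  fixes n :: nat and L :: "nat \<Rightarrow> 'b set" and VH :: "'b set" and EH :: "'b \<Rightarrow> 'b \<Rightarrow> bool"
  assumes "n \<ge> 3"
    and "corr_cover {0..<n} (cycle_edge n) L VH EH"
    and "\<forall>v\<in>{0..<n}. finite (L v) \<and> card (L v) \<ge> 2"
    and "card {v\<in>{0..<n}. card (L v) \<ge> 3} \<ge> 3"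
  shows "has_fractional_packing {0..<n} L VH EH"
  using main_gen[OF assms(1) assms(2-4) refl] .

end
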